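(* Let $1/2<\alpha<1$, $m\ge1$, and let $n,k$ be integers with $3\le k\le n-1$. Let $H=C_k\cup P_{n-k}$. Then $\lambda_1(A_\alpha(K_m\vee H))>\lambda_1(A_\alpha(K_m\vee P_n))$.
   Context: All graphs are finite, simple and undirected. $A_\alpha(G)=\alpha D(G)+(1-\alpha)A(G)$ with $A(G)$ the adjacency and $D(G)$ the degree matrix; $\lambda_1$ denotes the largest eigenvalue. $C_k$ is the cycle and $P_j$ the path on the indicated number of vertices, $\cup$ is disjoint union, $K_m$ the complete graph, and $\vee$ the join (disjoint union plus all edges between the two vertex sets). *)

theory Defs
  imports "Jordan_Normal_Form.Char_Poly"
begin

(* A finite simple graph on vertex set {0..<N}: (N, adjacency relation).
   The adjacency relation is symmetric, irreflexive and only relates vertices < N. *)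
type_synonym sgraph = "nat \<times> (nat \<Rightarrow> nat \<Rightarrow> bool)"

definition verts :: "sgraph \<Rightarrow> nat" where "verts G = fst G"
definition adj :: "sgraph \<Rightarrow> nat \<Rightarrow> nat \<Rightarrow> bool" where "adj G = snd G"

definition complete_graph :: "nat \<Rightarrow> sgraph" where
  "complete_graph m = (m, \<lambda>i j. i < m \<and> j < m \<and> i \<noteq> j)"

definition path_graph :: "nat \<Rightarrow> sgraph" where
  "path_graph p = (p, \<lambda>i j. i < p \<and> j < p \<and> (j = i + 1 \<or> i = j + 1))"

definition cycle_graph :: "nat \<Rightarrow> sgraph" where
  "cycle_graph k = (k, \<lambda>i j. i < k \<and> j < k \<and> (j = (i + 1) mod k \<or> i = (j + 1) mod k))"

definition disj_union :: "sgraph \<Rightarrow> sgraph \<Rightarrow> sgraph" where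
  "disj_union G H = (verts G + verts H, \<lambda>i j.
      (i < verts G \<and> j < verts G \<and> adj G i j) \<or>
      (verts G \<le> i \<and> verts G \<le> j \<and> i < verts G + verts H \<and> j < verts G + verts H
        \<and> adj H (i - verts G) (j - verts G)))"

definition join :: "sgraph \<Rightarrow> sgraph \<Rightarrow> sgraph" where
  "join G H = (verts G + verts H, \<lambda>i j.
      adj (disj_union G H) i j \<or>
      (i < verts G \<and> verts G \<le> j \<and> j < verts G + verts H) \<or>
      (j < verts G \<and> verts G \<le> i \<and> i < verts G + verts H))"

definition degree :: "sgraph \<Rightarrow> nat \<Rightarrow> nat" where
  "degree G i = card {j. j < verts G \<and> adj G i j}"

definition A_alpha :: "real \<Rightarrow> sgraph \<Rightarrow> real mat" where
  "A_alpha \<alpha> G = mat (verts G) (verts G) (\<lambda>(i, j).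
      \<alpha> * (if i = j then real (degree G i) else 0) + (1 - \<alpha>) * (if adj G i j then 1 else 0))"

definition lambda1 :: "real mat \<Rightarrow> real" where
  "lambda1 M = Max {x. eigenvalue M x}"

end

theory Submission
  imports Defs "Jordan_Normal_Form.Spectral_Radius"
begin

definition symm :: "real mat \<Rightarrow> nat \<Rightarrow> bool" where
  "symm M N \<longleftrightarrow> M \<in> carrier_mat N N \<and> (\<forall>i<N. \<forall>j<N. M $$ (i,j) = M $$ (j,i))"

lemma mult_vec_sum:
  assumes "M \<in> carrier_mat N N" "v \<in> carrier_vec N" "i < N"
  shows "(M *\<^sub>v v) $ i = (\<Sum>j<N. M $$ (i,j) * v $ j)"
  using assms by (auto simp: mult_mat_vec_def scalar_prod_def row_def atLeast0LessThan)

lemma row_sprod_sum: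
  assumes "M \<in> carrier_mat N N" "v \<in> carrier_vec N" "i < N"
  shows "row M i \<bullet> v = (\<Sum>j<N. M $$ (i,j) * v $ j)"
  using mult_vec_sum[OF assms] assms by simp

lemma complex_ev_real:
  assumes S: "symm M N" and ev: "eigenvalue (map_mat complex_of_real M) \<mu>"
  shows "Im \<mu> = 0 \<and> eigenvalue M (Re \<mu>)"
proof -
  have M: "M \<in> carrier_mat N N" and sy: "\<And>i j. i<N \<Longrightarrow> j<N \<Longrightarrow> M $$ (i,j) = M $$ (j,i)"
    using S unfolding symm_def by auto
  let ?C = "map_mat complex_of_real M"
  have C: "?C \<in> carrier_mat N N" using M by auto
  obtain v where v: "v \<in> carrier_vec N" and v0: "v \<noteq> 0\<^sub>v N" and Cv: "?C *\<^sub>v v = \<mu> \<cdot>\<^sub>v v"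
    using ev M unfolding eigenvalue_def eigenvector_def by auto
  have eq: "(\<Sum>j<N. complex_of_real (M $$ (i,j)) * v $ j) = \<mu> * v $ i" if "i < N" for i
  proof -
    have "(?C *\<^sub>v v) $ i = (\<mu> \<cdot>\<^sub>v v) $ i" using Cv by simp
    thus ?thesis using mult_vec_sum[OF C v that] that M v by auto
  qed
  define s where "s = (\<Sum>i<N. \<Sum>j<N. cnj (v $ i) * complex_of_real (M $$ (i,j)) * v $ j)"
  have s1: "s = \<mu> * complex_of_real (\<Sum>i<N. (cmod (v $ i))^2)"
  proof -
    have "s = (\<Sum>i<N. cnj (v $ i) * (\<Sum>j<N. complex_of_real (M $$ (i,j)) * v $ j))"
      unfolding s_def by (simp add: sum_distrib_left mult.assoc)
    also have "\<dots> = (\<Sum>i<N. \<mu> * (cnj (v $ i) * v $ i))" 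
      by (rule sum.cong, simp, simp add: eq)
    also have "\<dots> = \<mu> * complex_of_real (\<Sum>i<N. (cmod (v $ i))^2)"
      unfolding of_real_sum sum_distrib_left
      by (rule sum.cong, simp, simp only: of_real_power complex_norm_square[symmetric] mult.commute)
    finally show ?thesis .
  qed
  have s2: "cnj s = s"
  proof -
    have "cnj s = (\<Sum>i<N. \<Sum>j<N. v $ i * complex_of_real (M $$ (i,j)) * cnj (v $ j))"
      unfolding s_def by (simp add: cnj_sum)
    also have "\<dots> = (\<Sum>j<N. \<Sum>i<N. v $ i * complex_of_real (M $$ (i,j)) * cnj (v $ j))"
      by (rule sum.swap)
    also have "\<dots> = s" unfolding s_def
      by (intro sum.cong refl, auto simp: sy mult.commute mult.left_commute)
    finally show ?thesis .
  qed
  have pos: "(\<Sum>i<N. (cmod (v $ i))^2) > 0"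
  proof -
    obtain i where i: "i < N" "v $ i \<noteq> 0" using v v0 by (metis eq_vecI carrier_vecD index_zero_vec)
    have "(cmod (v $ i))^2 \<le> (\<Sum>i<N. (cmod (v $ i))^2)"
      by (rule member_le_sum, insert i, auto)
    moreover have "(cmod (v $ i))^2 > 0" using i by simp
    ultimately show ?thesis by linarith
  qed
  define r where "r = (\<Sum>i<N. (cmod (v $ i))^2)"
  have "cnj \<mu> * complex_of_real r = \<mu> * complex_of_real r" using s1 s2 unfolding r_def
    by (metis complex_cnj_complex_of_real complex_cnj_mult)
  moreover have "complex_of_real r \<noteq> 0" using pos unfolding r_def by (simp only: of_real_eq_0_iff)
  ultimately have "cnj \<mu> = \<mu>" by (metis mult_cancel_right)
  hence im: "Im \<mu> = 0" by (metis Reals_cnj_iff complex_is_Real_iff)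
  hence mu: "\<mu> = complex_of_real (Re \<mu>)" by (simp add: complex_eq_iff)
  have eqR: "(\<Sum>j<N. M $$ (i,j) * Re (v $ j)) = Re \<mu> * Re (v $ i)"
     and eqI: "(\<Sum>j<N. M $$ (i,j) * Im (v $ j)) = Re \<mu> * Im (v $ i)" if "i < N" for i
  proof -
    have "(\<Sum>j<N. complex_of_real (M $$ (i,j)) * v $ j) = complex_of_real (Re \<mu>) * v $ i"
      using eq[OF that] mu by simp
    from arg_cong[OF this, of Re] arg_cong[OF this, of Im]
    show "(\<Sum>j<N. M $$ (i,j) * Re (v $ j)) = Re \<mu> * Re (v $ i)"
      "(\<Sum>j<N. M $$ (i,j) * Im (v $ j)) = Re \<mu> * Im (v $ i)"
      by (simp_all add: Re_sum Im_sum)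
  qed
  obtain i where i: "i < N" "v $ i \<noteq> 0" using v v0 by (metis eq_vecI carrier_vecD index_zero_vec)
  have gen: "eigenvalue M (Re \<mu>)" if f: "\<And>i. i<N \<Longrightarrow> (\<Sum>j<N. M $$ (i,j) * f j) = Re \<mu> * f i"
    and fi: "f i \<noteq> 0" for f
  proof -
    define w where "w = vec N f"
    have w: "w \<in> carrier_vec N" unfolding w_def by simp
    have "(M *\<^sub>v w) $ j = Re \<mu> * f j" if "j<N" for j 
      by (subst mult_vec_sum[OF M w that]) (simp add: w_def f that)
    hence "M *\<^sub>v w = Re \<mu> \<cdot>\<^sub>v w"
      by (intro eq_vecI, insert M w, auto simp: w_def)
    moreover have "w \<noteq> 0\<^sub>v N" 
    proof
      assume "w = 0\<^sub>v N" 
      hence "w $ i = 0" using i by simp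
      thus False using fi i unfolding w_def by simp
    qed
    ultimately show ?thesis unfolding eigenvalue_def eigenvector_def using M w by auto
  qed
  show ?thesis
  proof (cases "Re (v $ i) = 0")
    case True
    hence ii: "Im (v $ i) \<noteq> 0" using i by (simp add: complex_eq_iff)
    show ?thesis using im gen[of "\<lambda>j. Im (v $ j)", OF eqI ii] by simp
  next
    case False
    show ?thesis using im gen[of "\<lambda>j. Re (v $ j)", OF eqR False] by simp
  qed
qed


definition qf :: "real mat \<Rightarrow> real vec \<Rightarrow> real" where
  "qf M v = v \<bullet> (M *\<^sub>v v)"

lemma sprod_sum: "v \<in> carrier_vec N \<Longrightarrow> w \<in> carrier_vec N \<Longrightarrow> v \<bullet> w = (\<Sum>i<N. v $ i * w $ i)"
  by (auto simp: scalar_prod_def atLeast0LessThan)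

lemma adjoint:
  assumes S: "symm M N" and u: "u \<in> carrier_vec N" and w: "w \<in> carrier_vec N"
  shows "(M *\<^sub>v u) \<bullet> w = u \<bullet> (M *\<^sub>v w)"
proof -
  have M: "M \<in> carrier_mat N N" and sy: "\<And>i j. i<N \<Longrightarrow> j<N \<Longrightarrow> M $$ (i,j) = M $$ (j,i)"
    using S unfolding symm_def by auto
  have "(M *\<^sub>v u) \<bullet> w = (\<Sum>i<N. (\<Sum>j<N. M $$ (i,j) * u $ j) * w $ i)"
    using M u w by (simp add: sprod_sum[of _ N] mult_vec_sum)
  also have "\<dots> = (\<Sum>i<N. \<Sum>j<N. M $$ (i,j) * u $ j * w $ i)" by (simp add: sum_distrib_right)
  also have "\<dots> = (\<Sum>j<N. \<Sum>i<N. M $$ (i,j) * u $ j * w $ i)" by (rule sum.swap)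
  also have "\<dots> = (\<Sum>j<N. u $ j * (\<Sum>i<N. M $$ (j,i) * w $ i))"
    by (simp add: sum_distrib_left sy mult_ac)
  also have "\<dots> = u \<bullet> (M *\<^sub>v w)"
    using M u w by (simp add: sprod_sum[of _ N] mult_vec_sum)
  finally show ?thesis .
qed

lemma pow_mat_add: "A \<in> carrier_mat N N \<Longrightarrow> A ^\<^sub>m (p + q) = A ^\<^sub>m p * A ^\<^sub>m q"
proof (induction q)
  case 0 thus ?case by simp
next
  case (Suc q)
  have "A ^\<^sub>m (p + Suc q) = (A ^\<^sub>m p * A ^\<^sub>m q) * A" using Suc by simp
  also have "\<dots> = A ^\<^sub>m p * (A ^\<^sub>m q * A)" 
    by (rule assoc_mult_mat[of _ N N _ N], insert Suc, auto)
  finally show ?case by simp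
qed

lemma symm_carrier: "symm M N \<Longrightarrow> M \<in> carrier_mat N N" unfolding symm_def by auto

lemma adjoint_pow:
  assumes S: "symm M N" and u: "u \<in> carrier_vec N" and w: "w \<in> carrier_vec N"
  shows "(M ^\<^sub>m p *\<^sub>v u) \<bullet> w = u \<bullet> (M ^\<^sub>m p *\<^sub>v w)"
  using u w
proof (induction p arbitrary: u w)
  case 0 thus ?case using symm_carrier[OF S] by simp
next
  case (Suc p)
  have M: "M \<in> carrier_mat N N" using symm_carrier[OF S] .
  have e: "M ^\<^sub>m Suc p = M * M ^\<^sub>m p" using pow_mat_add[OF M, of 1 p] M by simp
  have "(M ^\<^sub>m Suc p *\<^sub>v u) \<bullet> w = (M *\<^sub>v (M ^\<^sub>m p *\<^sub>v u)) \<bullet> w"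
    unfolding e using M Suc.prems by (simp add: assoc_mult_mat_vec[of _ N N _ N])
  also have "\<dots> = (M ^\<^sub>m p *\<^sub>v u) \<bullet> (M *\<^sub>v w)" using adjoint[OF S, of "M ^\<^sub>m p *\<^sub>v u" w] M Suc.prems
    by (metis mult_mat_vec_carrier pow_carrier_mat)
  also have "\<dots> = u \<bullet> (M ^\<^sub>m p *\<^sub>v (M *\<^sub>v w))" using Suc.IH Suc.prems M by simp
  also have "\<dots> = u \<bullet> (M ^\<^sub>m Suc p *\<^sub>v w)" 
    using M Suc.prems by (simp add: assoc_mult_mat_vec[of _ N N _ N])
  finally show ?case .
qed

lemma cs_step:
  fixes u v :: "real vec"
  assumes u: "u \<in> carrier_vec N" and v: "v \<in> carrier_vec N" and n: "v \<bullet> v > 0"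
  shows "(v \<bullet> u)^2 / (v \<bullet> v) \<le> u \<bullet> u"
proof -
  define t where "t = (v \<bullet> u) / (v \<bullet> v)"
  have "0 \<le> (\<Sum>i<N. (u $ i - t * v $ i)^2)" by (rule sum_nonneg, simp)
  also have "\<dots> = (\<Sum>i<N. u$i * u$i) - 2 * t * (\<Sum>i<N. v$i * u$i) + t^2 * (\<Sum>i<N. v$i * v$i)"
    by (simp add: power2_eq_square algebra_simps sum_subtractf sum_distrib_left sum.distrib)
  also have "\<dots> = u \<bullet> u - 2 * t * (v \<bullet> u) + t^2 * (v \<bullet> v)" using u v by (simp add: sprod_sum)
  also have "\<dots> = u \<bullet> u - (v \<bullet> u)^2 / (v \<bullet> v)" using n unfolding t_def
    by (simp add: field_simps power2_eq_square)
  finally show ?thesis by simp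
qed

lemma quad_bound:
  fixes A :: "real mat"
  assumes A: "A \<in> carrier_mat N N" and v: "v \<in> carrier_vec N"
    and c: "\<And>i j. i<N \<Longrightarrow> j<N \<Longrightarrow> \<bar>A $$ (i,j)\<bar> \<le> c"
  shows "v \<bullet> (A *\<^sub>v v) \<le> c * (\<Sum>i<N. \<bar>v $ i\<bar>)^2"
proof -
  have "v \<bullet> (A *\<^sub>v v) = (\<Sum>i<N. \<Sum>j<N. v $ i * A $$ (i,j) * v $ j)"
    using A v by (simp add: sprod_sum[of _ N] mult_vec_sum sum_distrib_left mult_ac)
  also have "\<dots> \<le> (\<Sum>i<N. \<Sum>j<N. c * (\<bar>v $ i\<bar> * \<bar>v $ j\<bar>))"
  proof (intro sum_mono)
    fix i j assume "i \<in> {..<N}" "j \<in> {..<N}"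
    hence "\<bar>A $$ (i,j)\<bar> \<le> c" using c by auto
    hence "\<bar>v $ i * A $$ (i,j) * v $ j\<bar> \<le> c * (\<bar>v $ i\<bar> * \<bar>v $ j\<bar>)"
    proof -
      have "\<bar>v $ i\<bar> * \<bar>v $ j\<bar> * \<bar>A $$ (i,j)\<bar> \<le> \<bar>v $ i\<bar> * \<bar>v $ j\<bar> * c"
        by (rule mult_left_mono, fact, simp)
      thus ?thesis by (simp add: abs_mult mult_ac)
    qed
    thus "v $ i * A $$ (i,j) * v $ j \<le> c * (\<bar>v $ i\<bar> * \<bar>v $ j\<bar>)" by linarith
  qed
  also have "\<dots> = c * (\<Sum>i<N. \<bar>v $ i\<bar>)^2"
    by (simp add: power2_eq_square sum_distrib_left sum_product mult_ac)
  finally show ?thesis .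
qed


lemma sq_pos:
  fixes v :: "real vec"
  assumes v: "v \<in> carrier_vec N" and v0: "v \<noteq> 0\<^sub>v N"
  shows "v \<bullet> v > 0"
proof -
  obtain i where i: "i < N" "v $ i \<noteq> 0" using v v0 by (metis eq_vecI carrier_vecD index_zero_vec)
  have "v \<bullet> v = (\<Sum>j<N. (v $ j)^2)" using v by (simp add: sprod_sum power2_eq_square)
  moreover have "(v $ i)^2 \<le> (\<Sum>j<N. (v $ j)^2)" by (rule member_le_sum, insert i, auto)
  moreover have "(v $ i)^2 > 0" using i by simp
  ultimately show ?thesis by linarith
qed

lemma sq_nonneg: fixes v :: "real vec" shows "v \<in> carrier_vec N \<Longrightarrow> v \<bullet> v \<ge> 0"
  by (simp add: sprod_sum sum_nonneg)

lemma power_bounded: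
  assumes S: "symm M N" and N: "N > 0" and ev: "\<And>\<mu>. eigenvalue M \<mu> \<Longrightarrow> 0 \<le> \<mu> \<and> \<mu> < 1"
  shows "\<exists>c. \<forall>k i j. i < N \<longrightarrow> j < N \<longrightarrow> \<bar>(M ^\<^sub>m k) $$ (i,j)\<bar> \<le> c"
proof -
  have M: "M \<in> carrier_mat N N" using symm_carrier[OF S] .
  let ?C = "of_real_hom.mat_hom M :: complex mat"
  have C: "?C \<in> carrier_mat N N" using M by auto
  obtain \<mu> where mu: "\<mu> \<in> spectrum ?C" and sr: "spectral_radius ?C = cmod \<mu>"
    using spectral_radius_mem_max(1)[OF C N] by auto
  from complex_ev_real[OF S, of \<mu>] mu have "Im \<mu> = 0" "eigenvalue M (Re \<mu>)"
    unfolding spectrum_def by auto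
  with ev have "spectral_radius ?C < 1" unfolding sr by (auto simp: cmod_eq_Re)
  from spectral_radius_jnf_norm_bound_less_1_upper_triangular[OF C this]
  obtain c where c: "\<And>k. norm_bound (?C ^\<^sub>m k) c" by auto
  have "\<bar>(M ^\<^sub>m k) $$ (i,j)\<bar> \<le> c" if "i < N" "j < N" for k i j
  proof -
    have "norm ((?C ^\<^sub>m k) $$ (i,j)) \<le> c" using c[of k] that M unfolding norm_bound_def by auto
    also have "?C ^\<^sub>m k = of_real_hom.mat_hom (M ^\<^sub>m k)" by (rule sym, rule of_real_hom.mat_hom_pow[OF M])
    finally show ?thesis using that M by simp
  qed
  thus ?thesis by blast
qed

lemma no_growth:
  assumes S: "symm M N" and v: "v \<in> carrier_vec N"
    and c: "\<And>k i j. i < N \<Longrightarrow> j < N \<Longrightarrow> \<bar>(M ^\<^sub>m k) $$ (i,j)\<bar> \<le> c"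
  shows "qf M v \<le> v \<bullet> v"
proof (rule ccontr)
  assume gt: "\<not> qf M v \<le> v \<bullet> v"
  have M: "M \<in> carrier_mat N N" using symm_carrier[OF S] .
  have n: "v \<bullet> v > 0"
  proof (rule sq_pos[OF v], rule)
    assume "v = 0\<^sub>v N" 
    hence "qf M v = 0" unfolding qf_def using M by simp
    thus False using gt \<open>v = 0\<^sub>v N\<close> by simp
  qed
  define n where "n = v \<bullet> v"
  define a where "a k = v \<bullet> (M ^\<^sub>m k *\<^sub>v v)" for k
  define b where "b k = a k / n" for k
  have pc: "M ^\<^sub>m k *\<^sub>v w \<in> carrier_vec N" if "w \<in> carrier_vec N" for k w
    using that M by (metis mult_mat_vec_carrier pow_carrier_mat)
  have b2: "b (p + p) \<ge> (b p)^2" for p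
  proof -
    define u where "u = M ^\<^sub>m p *\<^sub>v v"
    have u: "u \<in> carrier_vec N" unfolding u_def by (rule pc[OF v])
    have "a (p + p) = v \<bullet> (M ^\<^sub>m p *\<^sub>v u)" unfolding a_def u_def pow_mat_add[OF M]
      using M v by (simp add: assoc_mult_mat_vec[of _ N N _ N])
    also have "\<dots> = u \<bullet> u" using adjoint_pow[OF S v u, of p] unfolding u_def by simp
    finally have "a (p+p) \<ge> (v \<bullet> u)^2 / n" using cs_step[OF u v n] unfolding n_def by simp
    moreover have "a p = v \<bullet> u" unfolding a_def u_def by simp
    ultimately have "a (p+p) \<ge> (a p)^2 / n" by simp
    thus ?thesis unfolding b_def using n unfolding n_def[symmetric]
      by (simp add: divide_right_mono power2_eq_square field_simps)
  qed
  have b1: "b 1 > 1" using gt n unfolding b_def a_def n_def qf_def using M by simp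
  have pw: "b (2^j) \<ge> (b 1)^(2^j)" for j
  proof (induction j)
    case 0 thus ?case by simp
  next
    case (Suc j)
    have "(b 1)^(2^Suc j) = ((b 1)^(2^j))^2" by (simp add: power_mult[symmetric] mult.commute)
    also have "\<dots> \<le> (b (2^j))^2" 
      by (rule power_mono[OF Suc], insert b1, simp)
    also have "\<dots> \<le> b (2^j + 2^j)" by (rule b2)
    finally show ?case by (simp add: mult_2)
  qed
  define B where "B = c * (\<Sum>i<N. \<bar>v $ i\<bar>)^2 / n"
  have bb: "b k \<le> B" for k
    unfolding b_def B_def a_def using quad_bound[OF pow_carrier_mat[OF M] v c] n unfolding n_def[symmetric]
    by (simp add: divide_right_mono)
  obtain j where j: "B < (b 1)^j" using real_arch_pow[OF b1] by auto
  have "(b 1)^j \<le> (b 1)^(2^j)" by (rule power_increasing, insert b1, auto)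
  with pw[of j] bb[of "2^j"] j show False by linarith
qed


lemma ev_exists:
  assumes S: "symm M N" and N: "N > 0"
  shows "\<exists>\<mu>. eigenvalue M \<mu>"
proof -
  have M: "M \<in> carrier_mat N N" using symm_carrier[OF S] .
  let ?C = "of_real_hom.mat_hom M :: complex mat"
  have C: "?C \<in> carrier_mat N N" using M by auto
  from spectrum_non_empty[OF C N] obtain \<mu> where "\<mu> \<in> spectrum ?C" by auto
  with complex_ev_real[OF S, of \<mu>] show ?thesis unfolding spectrum_def by auto
qed

definition psd :: "real mat \<Rightarrow> nat \<Rightarrow> bool" where
  "psd M N \<longleftrightarrow> (\<forall>v \<in> carrier_vec N. qf M v \<ge> 0)"

lemma psd_ev_nonneg:
  assumes S: "symm M N" and P: "psd M N" and ev: "eigenvalue M \<mu>"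
  shows "\<mu> \<ge> 0"
proof -
  have M: "M \<in> carrier_mat N N" using symm_carrier[OF S] .
  obtain w where w: "w \<in> carrier_vec N" "w \<noteq> 0\<^sub>v N" "M *\<^sub>v w = \<mu> \<cdot>\<^sub>v w"
    using ev M unfolding eigenvalue_def eigenvector_def by auto
  have "qf M w = \<mu> * (w \<bullet> w)" unfolding qf_def w(3) using w(1) by simp
  moreover have "qf M w \<ge> 0" using P w unfolding psd_def by auto
  moreover have "w \<bullet> w > 0" by (rule sq_pos[OF w(1,2)])
  ultimately show ?thesis by (simp add: zero_le_mult_iff)
qed

lemma ev_gt:
  assumes S: "symm M N" and N: "N > 0" and P: "psd M N" and v: "v \<in> carrier_vec N"
    and gt: "qf M v > r * (v \<bullet> v)"
  shows "\<exists>\<mu>. eigenvalue M \<mu> \<and> \<mu> > r"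
proof (rule ccontr)
  assume H: "\<not> ?thesis"
  have M: "M \<in> carrier_mat N N" using symm_carrier[OF S] .
  show False
  proof (cases "r < 0")
    case True
    obtain \<mu> where "eigenvalue M \<mu>" using ev_exists[OF S N] by auto
    with psd_ev_nonneg[OF S P this] H True show False by auto
  next
    case False
    have n: "v \<bullet> v > 0"
    proof (rule sq_pos[OF v], rule)
      assume "v = 0\<^sub>v N" 
      hence "qf M v = 0" unfolding qf_def using M by simp
      thus False using gt \<open>v = 0\<^sub>v N\<close> by simp
    qed
    define s where "s = qf M v / (v \<bullet> v)"
    have rs: "r < s" using gt n unfolding s_def by (simp add: field_simps)
    define t where "t = (r + s) / 2"
    have t: "0 < t" "r < t" "t < s" using rs False unfolding t_def by auto
    define M' where "M' = (1/t) \<cdot>\<^sub>m M"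
    have M': "M' \<in> carrier_mat N N" unfolding M'_def using M by simp
    have S': "symm M' N" using S unfolding symm_def M'_def by auto
    have mv: "M' *\<^sub>v w = (1/t) \<cdot>\<^sub>v (M *\<^sub>v w)" if "w \<in> carrier_vec N" for w
      by (rule eq_vecI, insert that M M', auto simp: mult_vec_sum M'_def sum_distrib_left mult.assoc)
    have ev': "0 \<le> \<mu> \<and> \<mu> < 1" if evm: "eigenvalue M' \<mu>" for \<mu>
    proof -
      obtain w where w: "w \<in> carrier_vec N" "w \<noteq> 0\<^sub>v N" "M' *\<^sub>v w = \<mu> \<cdot>\<^sub>v w"
        using evm M' unfolding eigenvalue_def eigenvector_def by auto
      have "M *\<^sub>v w = (t * \<mu>) \<cdot>\<^sub>v w"
      proof -
        have "M *\<^sub>v w = t \<cdot>\<^sub>v (M' *\<^sub>v w)" unfolding mv[OF w(1)] using t M w by (auto simp: smult_smult_assoc)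
        thus ?thesis unfolding w(3) by (simp add: smult_smult_assoc)
      qed
      hence "eigenvalue M (t * \<mu>)" using w M unfolding eigenvalue_def eigenvector_def by auto
      with H psd_ev_nonneg[OF S P this] have "0 \<le> t * \<mu>" "t * \<mu> \<le> r" by auto
      hence h: "0 \<le> t * \<mu>" "t * \<mu> < t * 1" using t by linarith+
      have "0 \<le> \<mu>" using h(1) t(1) by (simp add: zero_le_mult_iff)
      moreover have "\<mu> < 1" using h(2) t(1) by (simp only: mult_less_cancel_left_pos)
      ultimately show ?thesis by simp
    qed
    obtain c where c: "\<forall>k i j. i < N \<longrightarrow> j < N \<longrightarrow> \<bar>(M' ^\<^sub>m k) $$ (i,j)\<bar> \<le> c"
      using power_bounded[OF S' N ev'] by auto
    have "qf M' v \<le> v \<bullet> v" by (rule no_growth[OF S' v], insert c, auto)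
    moreover have "qf M' v = s * (v \<bullet> v) / t" unfolding qf_def mv[OF v] s_def using n v M
      by (simp add: scalar_prod_smult_distrib[of _ N])
    ultimately have "s * (v \<bullet> v) \<le> t * (v \<bullet> v)" using t by (simp add: field_simps)
    thus False using n t by simp
  qed
qed

lemma spectrum_eq: "{x. eigenvalue M x} = spectrum M" unfolding spectrum_def by simp

lemma lambda1_props:
  assumes S: "symm M N" and N: "N > 0"
  shows "eigenvalue M (lambda1 M)" "\<And>\<mu>. eigenvalue M \<mu> \<Longrightarrow> \<mu> \<le> lambda1 M"
proof -
  have M: "M \<in> carrier_mat N N" using symm_carrier[OF S] .
  have fin: "finite {x. eigenvalue M x}" using card_finite_spectrum(1)[OF M] spectrum_eq by metis
  have ne: "{x. eigenvalue M x} \<noteq> {}" using ev_exists[OF S N] by auto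
  show "eigenvalue M (lambda1 M)" unfolding lambda1_def using Max_in[OF fin ne] by simp
  show "\<And>\<mu>. eigenvalue M \<mu> \<Longrightarrow> \<mu> \<le> lambda1 M" unfolding lambda1_def using Max_ge[OF fin] by simp
qed

lemma lambda1_gt:
  assumes S: "symm M N" and N: "N > 0" and P: "psd M N" and v: "v \<in> carrier_vec N"
    and gt: "qf M v > r * (v \<bullet> v)"
  shows "lambda1 M > r"
  using ev_gt[OF assms] lambda1_props(2)[OF S N] by force

lemma rayleigh:
  assumes S: "symm M N" and N: "N > 0" and P: "psd M N" and v: "v \<in> carrier_vec N"
  shows "qf M v \<le> lambda1 M * (v \<bullet> v)"
  using lambda1_gt[OF S N P v, of "lambda1 M"] by linarith


lemma sum_adjoint:
  assumes sy: "\<And>i j. i<N \<Longrightarrow> j<N \<Longrightarrow> (M::real mat) $$ (i,j) = M $$ (j,i)"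
  shows "(\<Sum>i<N. a i * (\<Sum>j<N. M $$ (i,j) * b j)) = (\<Sum>i<N. b i * (\<Sum>j<N. M $$ (i,j) * a j))"
proof -
  have "(\<Sum>i<N. a i * (\<Sum>j<N. M $$ (i,j) * b j)) = (\<Sum>i<N. \<Sum>j<N. a i * M $$ (i,j) * b j)"
    by (simp add: sum_distrib_left mult.assoc)
  also have "\<dots> = (\<Sum>j<N. \<Sum>i<N. a i * M $$ (i,j) * b j)" by (rule sum.swap)
  also have "\<dots> = (\<Sum>j<N. b j * (\<Sum>i<N. M $$ (j,i) * a i))"
    by (simp add: sum_distrib_left sy mult_ac)
  finally show ?thesis .
qed

lemma perturb:
  assumes S: "symm M N" and v: "v \<in> carrier_vec N" and ge: "qf M v \<ge> r * (v \<bullet> v)"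
    and ne: "M *\<^sub>v v \<noteq> r \<cdot>\<^sub>v v"
  shows "\<exists>w \<in> carrier_vec N. qf M w > r * (w \<bullet> w)"
proof -
  have M: "M \<in> carrier_mat N N" and sy: "\<And>i j. i<N \<Longrightarrow> j<N \<Longrightarrow> M $$ (i,j) = M $$ (j,i)"
    using S unfolding symm_def by auto
  define F where "F f i = (\<Sum>j<N. M $$ (i,j) * f j) - r * f i" for f i
  have qfF: "qf M (vec N f) - r * (vec N f \<bullet> vec N f) = (\<Sum>i<N. f i * F f i)" for f
  proof -
    have "qf M (vec N f) = (\<Sum>i<N. f i * (\<Sum>j<N. M $$ (i,j) * f j))"
      unfolding qf_def using M by (simp add: sprod_sum[of _ N] mult_vec_sum)
    moreover have "vec N f \<bullet> vec N f = (\<Sum>i<N. f i * f i)" by (simp add: sprod_sum[of _ N])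
    ultimately show ?thesis unfolding F_def by (simp add: sum_distrib_left sum_subtractf algebra_simps)
  qed
  have adjF: "(\<Sum>i<N. a i * F b i) = (\<Sum>i<N. b i * F a i)" for a b
    unfolding F_def using sum_adjoint[OF sy, where a=a and b=b]
    by (simp add: right_diff_distrib sum_subtractf mult_ac)
  have linF: "F (\<lambda>i. a i + t * b i) i = F a i + t * F b i" for a b t i
    unfolding F_def by (simp add: algebra_simps sum.distrib sum_distrib_left)
  define f where "f i = v $ i" for i
  have vf: "v = vec N f" using v unfolding f_def by auto
  define u where "u i = F f i" for i
  have Ugt: "(\<Sum>i<N. u i * u i) > 0"
  proof -
    obtain i where i: "i < N" "u i \<noteq> 0"
    proof (rule ccontr)
      assume "\<not> thesis"
      hence z: "\<And>i. i < N \<Longrightarrow> u i = 0" using that by blast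
      have "M *\<^sub>v v = r \<cdot>\<^sub>v v"
        by (rule eq_vecI, insert M v z, auto simp: row_sprod_sum u_def F_def f_def)
      thus False using ne by simp
    qed
    have "u i * u i \<le> (\<Sum>i<N. u i * u i)" by (rule member_le_sum, insert i, auto)
    moreover have "u i * u i > 0" using i(2) by (metis linorder_neqE_linordered_idom mult_neg_neg mult_pos_pos)
    ultimately show ?thesis by linarith
  qed
  define U where "U = (\<Sum>i<N. u i * u i)"
  define K where "K = (\<Sum>i<N. u i * F u i)"
  define D where "D = (\<Sum>i<N. f i * u i)"
  have D: "D \<ge> 0" using ge qfF[of f] unfolding D_def u_def vf by simp
  define t where "t = U / (\<bar>K\<bar> + 1)"
  have t: "t > 0" using Ugt unfolding t_def U_def by simp
  have tK: "t * \<bar>K\<bar> \<le> U" unfolding t_def using Ugt U_def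
    by (simp add: field_simps)
  define g where "g i = f i + t * u i" for i
  have "(\<Sum>i<N. g i * F g i) = D + t * (\<Sum>i<N. f i * F u i) + t * U + t * t * K"
    unfolding g_def linF D_def U_def K_def u_def
    by (simp add: algebra_simps sum.distrib sum_distrib_left)
  also have "(\<Sum>i<N. f i * F u i) = U" unfolding U_def using adjF[of f u] unfolding u_def by simp
  finally have val: "(\<Sum>i<N. g i * F g i) = D + 2 * t * U + t * (t * K)" by simp
  have "\<bar>t * K\<bar> \<le> U" using tK t by (simp add: abs_mult)
  hence "t * K \<ge> - U" using abs_ge_minus_self[of "t*K"] by linarith
  hence "t * (- U) \<le> t * (t * K)" by (rule mult_left_mono, insert t, simp)
  moreover have "t * U > 0" using t Ugt unfolding U_def by simp
  ultimately have "(\<Sum>i<N. g i * F g i) > 0" using val D by simp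
  hence "qf M (vec N g) > r * (vec N g \<bullet> vec N g)" using qfF[of g] by simp
  thus ?thesis by (intro bexI[of _ "vec N g"], auto)
qed

lemma lambda1_gt2:
  assumes S: "symm M N" and N: "N > 0" and P: "psd M N" and v: "v \<in> carrier_vec N"
    and ge: "qf M v \<ge> r * (v \<bullet> v)" and ne: "M *\<^sub>v v \<noteq> r \<cdot>\<^sub>v v"
  shows "lambda1 M > r"
  using perturb[OF S v ge ne] lambda1_gt[OF S N P] by blast

lemma maximizer_ev:
  assumes S: "symm M N" and N: "N > 0" and P: "psd M N" and v: "v \<in> carrier_vec N"
    and ge: "qf M v \<ge> lambda1 M * (v \<bullet> v)"
  shows "M *\<^sub>v v = lambda1 M \<cdot>\<^sub>v v"
  using lambda1_gt2[OF S N P v ge] by blast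


lemma split_sum: fixes m n :: nat shows "(\<Sum>i<m+n. F i) = (\<Sum>i<m. F i) + (\<Sum>h<n. F (m+h))"
  by (induction n) (auto simp: add.assoc)

definition ee :: "real \<Rightarrow> real \<Rightarrow> real \<Rightarrow> real" where
  "ee \<alpha> a b = \<alpha>*(a^2+b^2) + 2*(1-\<alpha>)*a*b"

lemma ee_sym: "ee \<alpha> a b = ee \<alpha> b a" unfolding ee_def by (simp add: algebra_simps)

lemma ee_nonneg: "1/2 \<le> \<alpha> \<Longrightarrow> \<alpha> \<le> 1 \<Longrightarrow> ee \<alpha> a b \<ge> 0"
proof -
  assume a: "1/2 \<le> \<alpha>" "\<alpha> \<le> 1"
  have "ee \<alpha> a b = (1-\<alpha>)*(a+b)^2 + (2*\<alpha>-1)*(a^2+b^2)" unfolding ee_def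
    by (simp add: algebra_simps power2_eq_square)
  also have "\<dots> \<ge> 0" using a by (intro add_nonneg_nonneg mult_nonneg_nonneg) auto
  finally show ?thesis .
qed

definition EF :: "real \<Rightarrow> (nat \<Rightarrow> nat \<Rightarrow> bool) \<Rightarrow> nat \<Rightarrow> (nat \<Rightarrow> real) \<Rightarrow> real" where
  "EF \<alpha> A n f = (\<Sum>i<n. \<Sum>j<n. if A i j then ee \<alpha> (f i) (f j) else 0)"

lemma A_carrier: "A_alpha \<alpha> G \<in> carrier_mat (verts G) (verts G)" by (simp add: A_alpha_def)

lemma A_entry: "i < verts G \<Longrightarrow> j < verts G \<Longrightarrow> A_alpha \<alpha> G $$ (i,j) =
   \<alpha>*(if i=j then real(degree G i) else 0) + (1-\<alpha>)*(if adj G i j then 1 else 0)"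
  by (simp add: A_alpha_def)

lemma A_symm: assumes "\<And>i j. i<verts G \<Longrightarrow> j<verts G \<Longrightarrow> adj G i j = adj G j i"
  shows "symm (A_alpha \<alpha> G) (verts G)"
  using assms unfolding symm_def by (auto simp: A_entry A_carrier)

lemma deg_sum: "real (degree G i) = (\<Sum>j<verts G. if adj G i j then 1 else 0)"
proof -
  have "{j. j < verts G \<and> adj G i j} = {j \<in> {..<verts G}. adj G i j}" by auto
  hence "degree G i = card {j \<in> {..<verts G}. adj G i j}" unfolding degree_def by simp
  also have "\<dots> = (\<Sum>j \<in> {j \<in> {..<verts G}. adj G i j}. 1)" by simp
  finally have "real (degree G i) = (\<Sum>j \<in> {j \<in> {..<verts G}. adj G i j}. (1::real))" by simp
  also have "\<dots> = (\<Sum>j<verts G. if adj G i j then 1 else 0)" by (rule sum.inter_filter, simp)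
  finally show ?thesis .
qed

lemma A_mult:
  assumes v: "v \<in> carrier_vec (verts G)" and i: "i < verts G"
  shows "(A_alpha \<alpha> G *\<^sub>v v) $ i = \<alpha> * real (degree G i) * v $ i
     + (1-\<alpha>) * (\<Sum>j<verts G. if adj G i j then v $ j else 0)"
proof -
  have "(A_alpha \<alpha> G *\<^sub>v v) $ i = (\<Sum>j<verts G. A_alpha \<alpha> G $$ (i,j) * v $ j)"
    by (rule mult_vec_sum[OF A_carrier v i])
  also have "\<dots> = (\<Sum>j<verts G. (if i = j then \<alpha> * real (degree G i) * v $ j else 0)
      + (1-\<alpha>) * (if adj G i j then v $ j else 0))"
    by (rule sum.cong, simp, simp add: A_entry i algebra_simps)
  also have "\<dots> = \<alpha> * real (degree G i) * v $ i
     + (1-\<alpha>) * (\<Sum>j<verts G. if adj G i j then v $ j else 0)"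
    using i by (simp add: sum.distrib sum_distrib_left)
  finally show ?thesis .
qed

lemma A_qf:
  assumes sy: "\<And>i j. i<verts G \<Longrightarrow> j<verts G \<Longrightarrow> adj G i j = adj G j i"
    and v: "v \<in> carrier_vec (verts G)"
  shows "qf (A_alpha \<alpha> G) v = EF \<alpha> (adj G) (verts G) (\<lambda>i. v $ i) / 2"
proof -
  let ?N = "verts G"
  define T where "T = (\<Sum>i<?N. \<Sum>j<?N. if adj G i j then \<alpha> * (v$i)^2 + (1-\<alpha>)*(v$i*v$j) else 0)"
  have "qf (A_alpha \<alpha> G) v = (\<Sum>i<?N. v $ i * (A_alpha \<alpha> G *\<^sub>v v) $ i)"
    unfolding qf_def by (rule sprod_sum[OF v mult_mat_vec_carrier[OF A_carrier v]])
  also have "\<dots> = T" unfolding T_def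
    by (rule sum.cong, simp, simp add: A_mult[OF v] deg_sum sum_distrib_left sum_distrib_right
        sum.distrib[symmetric] algebra_simps power2_eq_square if_distrib cong: if_cong)
  finally have q: "qf (A_alpha \<alpha> G) v = T" .
  have T2: "T = (\<Sum>i<?N. \<Sum>j<?N. if adj G i j then \<alpha> * (v$j)^2 + (1-\<alpha>)*(v$i*v$j) else 0)"
  proof -
    have "T = (\<Sum>j<?N. \<Sum>i<?N. if adj G i j then \<alpha> * (v$i)^2 + (1-\<alpha>)*(v$i*v$j) else 0)"
      unfolding T_def by (rule sum.swap)
    also have "\<dots> = (\<Sum>i<?N. \<Sum>j<?N. if adj G i j then \<alpha> * (v$j)^2 + (1-\<alpha>)*(v$i*v$j) else 0)"
      by (intro sum.cong refl, auto simp: sy mult.commute)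
    finally show ?thesis .
  qed
  have "EF \<alpha> (adj G) ?N (\<lambda>i. v $ i) = (\<Sum>i<?N. \<Sum>j<?N. 
     (if adj G i j then \<alpha> * (v$i)^2 + (1-\<alpha>)*(v$i*v$j) else 0) +
     (if adj G i j then \<alpha> * (v$j)^2 + (1-\<alpha>)*(v$i*v$j) else 0))"
    unfolding EF_def by (intro sum.cong refl) (simp add: ee_def algebra_simps)
  also have "\<dots> = T + T" 
    apply (subst (2) T2) unfolding T_def by (simp only: sum.distrib)
  finally have "EF \<alpha> (adj G) ?N (\<lambda>i. v $ i) = T + T" .
  thus ?thesis using q by simp
qed

lemma A_psd:
  assumes sy: "\<And>i j. i<verts G \<Longrightarrow> j<verts G \<Longrightarrow> adj G i j = adj G j i"
    and a: "1/2 \<le> \<alpha>" "\<alpha> \<le> 1"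
  shows "psd (A_alpha \<alpha> G) (verts G)"
  unfolding psd_def
proof
  fix v :: "real vec" assume v: "v \<in> carrier_vec (verts G)"
  have "EF \<alpha> (adj G) (verts G) (\<lambda>i. v $ i) \<ge> 0" unfolding EF_def
    by (intro sum_nonneg, auto intro: ee_nonneg[OF a])
  thus "qf (A_alpha \<alpha> G) v \<ge> 0" using A_qf[OF sy v, where \<alpha>=\<alpha>] by simp
qed


lemma join_verts: "verts (join (complete_graph m) H) = m + verts H"
  by (simp add: join_def verts_def disj_union_def complete_graph_def)

lemma join_adj: "adj (join (complete_graph m) H) i j = ((i<m \<and> j<m \<and> i\<noteq>j) \<or>
   (m\<le>i \<and> m\<le>j \<and> i<m+verts H \<and> j<m+verts H \<and> adj H (i-m) (j-m)) \<or>
   (i<m \<and> m\<le>j \<and> j<m+verts H) \<or> (j<m \<and> m\<le>i \<and> i<m+verts H))"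
  by (auto simp: join_def verts_def adj_def disj_union_def complete_graph_def)

lemma join_sym: "(\<And>p q. adj H p q = adj H q p) \<Longrightarrow>
   adj (join (complete_graph m) H) i j = adj (join (complete_graph m) H) j i"
  unfolding join_adj by auto

lemma EF_join:
  assumes n: "verts H = n"
  shows "EF \<alpha> (adj (join (complete_graph m) H)) (m+n) f = EF \<alpha> (\<lambda>i j. i\<noteq>j) m f
    + 2 * (\<Sum>u<m. \<Sum>h<n. ee \<alpha> (f u) (f (m+h))) + EF \<alpha> (adj H) n (\<lambda>h. f (m+h))"
proof -
  let ?A = "adj (join (complete_graph m) H)"
  let ?F = "\<lambda>i j. if ?A i j then ee \<alpha> (f i) (f j) else 0"
  have "EF \<alpha> ?A (m+n) f = (\<Sum>i<m. \<Sum>j<m+n. ?F i j) + (\<Sum>h<n. \<Sum>j<m+n. ?F (m+h) j)"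
    unfolding EF_def by (rule split_sum)
  also have "(\<Sum>i<m. \<Sum>j<m+n. ?F i j) = (\<Sum>i<m. (\<Sum>j<m. ?F i j) + (\<Sum>h<n. ?F i (m+h)))"
    by (simp only: split_sum)
  also have "\<dots> = EF \<alpha> (\<lambda>i j. i\<noteq>j) m f + (\<Sum>u<m. \<Sum>h<n. ee \<alpha> (f u) (f (m+h)))"
    unfolding EF_def sum.distrib by (intro arg_cong2[where f="(+)"] sum.cong refl, auto simp: join_adj n)
  also have "(\<Sum>h<n. \<Sum>j<m+n. ?F (m+h) j) = (\<Sum>h<n. (\<Sum>j<m. ?F (m+h) j) + (\<Sum>h'<n. ?F (m+h) (m+h')))"
    by (simp only: split_sum)
  also have "\<dots> = (\<Sum>h<n. \<Sum>u<m. ee \<alpha> (f u) (f (m+h))) + EF \<alpha> (adj H) n (\<lambda>h. f (m+h))"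
    unfolding EF_def sum.distrib by (intro arg_cong2[where f="(+)"] sum.cong refl, auto simp: join_adj n ee_sym)
  also have "(\<Sum>h<n. \<Sum>u<m. ee \<alpha> (f u) (f (m+h))) = (\<Sum>u<m. \<Sum>h<n. ee \<alpha> (f u) (f (m+h)))"
    by (rule sum.swap)
  finally show ?thesis by simp
qed

lemma nb_join:
  assumes n: "verts H = n" and p: "p < n"
  shows "(\<Sum>j<m+n. if adj (join (complete_graph m) H) (m+p) j then F j else 0)
    = (\<Sum>u<m. F u) + (\<Sum>q<n. if adj H p q then F (m+q) else 0)"
  by (simp only: split_sum, intro arg_cong2[where f="(+)"] sum.cong refl, auto simp: join_adj n p)

definition perm_on :: "(nat \<Rightarrow> nat) \<Rightarrow> (nat \<Rightarrow> nat) \<Rightarrow> nat \<Rightarrow> bool" where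
  "perm_on \<pi> \<psi> n \<longleftrightarrow> (\<forall>p<n. \<pi> p < n \<and> \<psi> p < n \<and> \<psi> (\<pi> p) = p \<and> \<pi> (\<psi> p) = p)"

lemma sum_perm:
  assumes "perm_on \<pi> \<psi> n"
  shows "(\<Sum>q<n. F (\<pi> q)) = (\<Sum>q<n. F q)"
  by (rule sum.reindex_bij_witness[where i=\<psi> and j=\<pi>], insert assms, auto simp: perm_on_def)

lemma EF_perm:
  assumes P: "perm_on \<pi> \<psi> n"
  shows "EF \<alpha> A n (\<lambda>q. g (\<pi> q)) = EF \<alpha> (\<lambda>p q. A (\<psi> p) (\<psi> q)) n g"
proof -
  define F where "F p q = (if A (\<psi> p) (\<psi> q) then ee \<alpha> (g p) (g q) else 0)" for p q
  have "EF \<alpha> A n (\<lambda>q. g (\<pi> q)) = (\<Sum>p<n. \<Sum>q<n. F (\<pi> p) (\<pi> q))"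
    unfolding EF_def F_def using P by (intro sum.cong refl, auto simp: perm_on_def)
  also have "\<dots> = (\<Sum>p<n. \<Sum>q<n. F (\<pi> p) q)" by (intro sum.cong refl sum_perm[OF P])
  also have "\<dots> = (\<Sum>p<n. \<Sum>q<n. F p q)" by (rule sum_perm[OF P, where F="\<lambda>p. \<Sum>q<n. F p q"])
  finally show ?thesis unfolding EF_def F_def .
qed

lemma EF_diff:
  assumes D: "D \<subseteq> {..<n} \<times> {..<n}" and same: "\<And>p q. p < n \<Longrightarrow> q < n \<Longrightarrow> (p,q) \<notin> D \<Longrightarrow> A p q = B p q"
  shows "EF \<alpha> A n g - EF \<alpha> B n g = (\<Sum>(p,q)\<in>D. (if A p q then ee \<alpha> (g p) (g q) else 0) - (if B p q then ee \<alpha> (g p) (g q) else 0))"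
proof -
  define h where "h = (\<lambda>(p,q). (if A p q then ee \<alpha> (g p) (g q) else 0) - (if B p q then ee \<alpha> (g p) (g q) else 0))"
  have "EF \<alpha> A n g - EF \<alpha> B n g = (\<Sum>p<n. \<Sum>q<n. h (p,q))"
    unfolding EF_def h_def by (simp add: sum_subtractf)
  also have "\<dots> = (\<Sum>pq\<in>{..<n} \<times> {..<n}. h pq)" by (simp add: sum.cartesian_product)
  also have "\<dots> = (\<Sum>pq\<in>D. h pq)"
    by (rule sum.mono_neutral_right, auto simp: D h_def same)
  finally show ?thesis unfolding h_def by simp
qed


definition lift :: "nat \<Rightarrow> nat \<Rightarrow> (nat \<Rightarrow> nat) \<Rightarrow> real vec \<Rightarrow> real vec" where
  "lift m n \<pi> x = vec (m+n) (\<lambda>i. if i<m then x$i else x$(m + \<pi> (i-m)))"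

lemma lift_carrier: "lift m n \<pi> x \<in> carrier_vec (m+n)" unfolding lift_def by simp

lemma lift_dim[simp]: "dim_vec (lift m n \<pi> x) = m+n" unfolding lift_def by simp

lemma lift_idx: "i < m+n \<Longrightarrow> lift m n \<pi> x $ i = (if i<m then x$i else x$(m + \<pi> (i-m)))"
  unfolding lift_def by simp

lemma lift_idx_K: "u < m \<Longrightarrow> lift m n \<pi> x $ u = x $ u" unfolding lift_def by simp
lemma lift_idx_H: "q < n \<Longrightarrow> lift m n \<pi> x $ (m+q) = x $ (m + \<pi> q)" unfolding lift_def by simp

lemma lift_sq:
  assumes P: "perm_on \<pi> \<psi> n" and x: "x \<in> carrier_vec (m+n)"
  shows "lift m n \<pi> x \<bullet> lift m n \<pi> x = x \<bullet> x"
proof -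
  have "lift m n \<pi> x \<bullet> lift m n \<pi> x = (\<Sum>i<m+n. lift m n \<pi> x $ i * lift m n \<pi> x $ i)"
    by (rule sprod_sum[OF lift_carrier lift_carrier])
  also have "\<dots> = (\<Sum>i<m. x$i * x$i) + (\<Sum>q<n. x$(m+\<pi> q) * x$(m+\<pi> q))"
    by (simp only: split_sum lift_idx_K lift_idx_H cong: sum.cong) (auto intro!: sum.cong simp: lift_idx_K lift_idx_H)
  also have "(\<Sum>q<n. x$(m+\<pi> q) * x$(m+\<pi> q)) = (\<Sum>q<n. x$(m+q) * x$(m+q))"
    by (rule sum_perm[OF P, where F="\<lambda>q. x$(m+q) * x$(m+q)"])
  also have "(\<Sum>i<m. x$i * x$i) + \<dots> = (\<Sum>i<m+n. x$i * x$i)" by (simp only: split_sum)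
  also have "\<dots> = x \<bullet> x" by (rule sprod_sum[OF x x, symmetric])
  finally show ?thesis .
qed

lemma lift_qf:
  assumes P: "perm_on \<pi> \<psi> n" and x: "x \<in> carrier_vec (m+n)"
    and Hn: "verts H = n" and H'n: "verts H' = n"
    and Hs: "\<And>p q. adj H p q = adj H q p" and H's: "\<And>p q. adj H' p q = adj H' q p"
  shows "qf (A_alpha \<alpha> (join (complete_graph m) H')) (lift m n \<pi> x) - qf (A_alpha \<alpha> (join (complete_graph m) H)) x
    = (EF \<alpha> (adj H') n (\<lambda>q. x$(m+\<pi> q)) - EF \<alpha> (adj H) n (\<lambda>q. x$(m+q))) / 2"
proof -
  let ?J = "join (complete_graph m) H" and ?J' = "join (complete_graph m) H'"
  have vJ: "verts ?J = m+n" and vJ': "verts ?J' = m+n" using Hn H'n by (simp_all add: join_verts)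
  have q1: "qf (A_alpha \<alpha> ?J') (lift m n \<pi> x) = EF \<alpha> (adj ?J') (m+n) (\<lambda>i. lift m n \<pi> x $ i) / 2"
    using A_qf[of ?J' "lift m n \<pi> x" \<alpha>] join_sym[OF H's] lift_carrier vJ' by auto
  have q2: "qf (A_alpha \<alpha> ?J) x = EF \<alpha> (adj ?J) (m+n) (\<lambda>i. x $ i) / 2"
    using A_qf[of ?J x \<alpha>] join_sym[OF Hs] x vJ by auto
  have e1: "EF \<alpha> (adj ?J') (m+n) (\<lambda>i. lift m n \<pi> x $ i) = EF \<alpha> (\<lambda>i j. i\<noteq>j) m (\<lambda>i. x $ i)
    + 2 * (\<Sum>u<m. \<Sum>h<n. ee \<alpha> (x $ u) (x $ (m + \<pi> h))) + EF \<alpha> (adj H') n (\<lambda>q. x$(m+\<pi> q))"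
  proof -
    have a: "EF \<alpha> (\<lambda>i j. i\<noteq>j) m (\<lambda>i. lift m n \<pi> x $ i) = EF \<alpha> (\<lambda>i j. i\<noteq>j) m (\<lambda>i. x $ i)"
      unfolding EF_def by (intro sum.cong refl, simp add: lift_idx_K)
    have b: "(\<Sum>u<m. \<Sum>h<n. ee \<alpha> (lift m n \<pi> x $ u) (lift m n \<pi> x $ (m+h)))
       = (\<Sum>u<m. \<Sum>h<n. ee \<alpha> (x $ u) (x $ (m + \<pi> h)))"
      by (intro sum.cong refl, simp add: lift_idx_K lift_idx_H)
    have c: "EF \<alpha> (adj H') n (\<lambda>h. lift m n \<pi> x $ (m+h)) = EF \<alpha> (adj H') n (\<lambda>q. x$(m+\<pi> q))"
      unfolding EF_def by (intro sum.cong refl, simp add: lift_idx_H)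
    show ?thesis using EF_join[OF H'n, of \<alpha> m "\<lambda>i. lift m n \<pi> x $ i"] a b c by simp
  qed
  have e2: "EF \<alpha> (adj ?J) (m+n) (\<lambda>i. x $ i) = EF \<alpha> (\<lambda>i j. i\<noteq>j) m (\<lambda>i. x $ i)
    + 2 * (\<Sum>u<m. \<Sum>h<n. ee \<alpha> (x $ u) (x $ (m + h))) + EF \<alpha> (adj H) n (\<lambda>q. x$(m+q))"
    using EF_join[OF Hn, of \<alpha> m "\<lambda>i. x $ i"] by simp
  have mid: "(\<Sum>u<m. \<Sum>h<n. ee \<alpha> (x $ u) (x $ (m + \<pi> h))) = (\<Sum>u<m. \<Sum>h<n. ee \<alpha> (x $ u) (x $ (m + h)))"
    by (intro sum.cong refl sum_perm[OF P, where F="\<lambda>h. ee \<alpha> (x $ _) (x $ (m + h))"])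
  show ?thesis unfolding q1 q2 e1 e2 mid by (simp add: field_simps)
qed

lemma path_verts: "verts (path_graph n) = n" by (simp add: path_graph_def verts_def)
lemma path_adj: "adj (path_graph n) p q = (p<n \<and> q<n \<and> (q = p+1 \<or> p = q+1))"
  by (simp add: path_graph_def adj_def)
lemma path_sym: "adj (path_graph n) p q = adj (path_graph n) q p" by (auto simp: path_adj)

lemma nb_path:
  assumes p: "p < n"
  shows "(\<Sum>q<n. if adj (path_graph n) p q then F q else 0)
    = (if 0<p then F (p-1) else 0) + (if p+1<n then F (p+1) else 0)"
proof -
  have "(\<Sum>q<n. if adj (path_graph n) p q then F q else 0) =
     (\<Sum>q<n. (if q = p-1 then (if 0<p then F q else 0) else 0) + (if q = p+1 then F q else 0))"
    using p by (intro sum.cong refl, auto simp: path_adj)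
  also have "\<dots> = (if 0<p then F (p-1) else 0) + (if p+1<n then F (p+1) else 0)"
    using p by (simp add: sum.distrib, auto)
  finally show ?thesis .
qed

definition H1 :: "nat \<Rightarrow> nat \<Rightarrow> sgraph" where
  "H1 k n = disj_union (cycle_graph k) (path_graph (n-k))"

lemma H1_verts: "k \<le> n \<Longrightarrow> verts (H1 k n) = n"
  by (simp add: H1_def disj_union_def verts_def cycle_graph_def path_graph_def)

lemma H1_adj: "adj (H1 k n) p q = ((p < k \<and> q < k \<and> (q = (p+1) mod k \<or> p = (q+1) mod k)) \<or>
   (k \<le> p \<and> k \<le> q \<and> p < n \<and> q < n \<and> (q = p+1 \<or> p = q+1)))" if "k \<le> n"
  using that by (auto simp: H1_def disj_union_def verts_def adj_def cycle_graph_def path_graph_def)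

lemma H1_sym: "k \<le> n \<Longrightarrow> adj (H1 k n) p q = adj (H1 k n) q p" by (auto simp: H1_adj)


lemma EF_diff':
  assumes D: "D \<subseteq> {..<n} \<times> {..<n}" and same: "\<And>p q. p < n \<Longrightarrow> q < n \<Longrightarrow> A p q \<noteq> B p q \<Longrightarrow> (p,q) \<in> D"
  shows "EF \<alpha> A n g - EF \<alpha> B n g = (\<Sum>(p,q)\<in>D. (if A p q then ee \<alpha> (g p) (g q) else 0) - (if B p q then ee \<alpha> (g p) (g q) else 0))"
  by (rule EF_diff[OF D], insert same, blast)

lemma sum8a:
  fixes a j :: nat and h :: "nat \<Rightarrow> nat \<Rightarrow> real"
  assumes "a+2 \<le> j" 
  shows "(\<Sum>(p,q)\<in>{(a,a+1),(a+1,a),(j,j+1),(j+1,j),(a,j),(j,a),(a+1,j+1),(j+1,a+1)}. h p q)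
    = h a (a+1) + h (a+1) a + h j (j+1) + h (j+1) j + h a j + h j a + h (a+1) (j+1) + h (j+1) (a+1)"
  using assms by (simp add: add.assoc)

lemma rev_adj:
  fixes a j n p q :: nat
  assumes aj: "a+2 \<le> j" "j+1 < n" and pq: "p < n" "q < n"
    and r: "\<And>q. r q = (if a+1 \<le> q \<and> q \<le> j then a+1+j-q else q)"
    and ne: "adj (path_graph n) (r p) (r q) \<noteq> adj (path_graph n) p q"
  shows "(p,q) \<in> {(a,a+1),(a+1,a),(j,j+1),(j+1,j),(a,j),(j,a),(a+1,j+1),(j+1,a+1)}"
proof -
  have rn: "r p < n" "r q < n" using r[of p] r[of q] aj pq by auto
  have ne: "(r q = r p + 1 \<or> r p = r q + 1) \<noteq> (q = p+1 \<or> p = q+1)"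
    using ne rn pq by (simp add: path_adj)
  consider "p \<le> a" | "a+1 \<le> p \<and> p \<le> j" | "j < p" by linarith
  thus ?thesis
  proof cases
    case 1
    then consider "q \<le> a" | "a+1 \<le> q \<and> q \<le> j" | "j < q" by linarith
    thus ?thesis proof cases case 1 thus ?thesis using \<open>p\<le>a\<close> ne r by auto 
    next case 2 thus ?thesis using \<open>p\<le>a\<close> ne r aj(1) by (auto split: if_splits)
    next case 3 thus ?thesis using \<open>p\<le>a\<close> ne r aj(1) by auto qed
  next
    case 2
    then consider "q \<le> a" | "a+1 \<le> q \<and> q \<le> j" | "j < q" by linarith
    thus ?thesis proof cases case 1 thus ?thesis using 2 ne r aj(1) by auto 
    next case 3 thus ?thesis using 2 ne r aj(1) by auto 
    next case b: 2 thus ?thesis using 2 ne r aj(1) by auto qed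
  next
    case 3
    then consider "q \<le> a" | "a+1 \<le> q \<and> q \<le> j" | "j < q" by linarith
    thus ?thesis proof cases case 1 thus ?thesis using 3 ne r aj(1) by auto 
    next case 2 thus ?thesis using 3 ne r aj(1) by auto 
    next case b: 3 thus ?thesis using 3 ne r aj(1) by auto qed
  qed
qed

lemma cyc_mod: 
  fixes c d k :: nat assumes "c < k" "d < k" "3 \<le> k"
  shows "(d = (c+1) mod k \<or> c = (d+1) mod k) = (d=c+1 \<or> c=d+1 \<or> (c=k-1 \<and> d=0) \<or> (c=0 \<and> d=k-1))"
proof -
  have m: "Suc x mod k = (if Suc x = k then 0 else Suc x)" if "x < k" for x
    using that by (cases "Suc x = k") auto
  show ?thesis using assms by (simp add: m) arith
qed

lemma H1_adj':
  assumes "3 \<le> k" "k \<le> n"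
  shows "adj (H1 k n) c d = ((c<k \<and> d<k \<and> (d=c+1 \<or> c=d+1 \<or> (c=k-1 \<and> d=0) \<or> (c=0 \<and> d=k-1))) \<or> (k\<le>c \<and> k\<le>d \<and> c<n \<and> d<n \<and> (d=c+1 \<or> c=d+1)))"
  using cyc_mod[of c k d] assms by (auto simp: H1_adj[OF assms(2)])

lemma sig_adj0:
  fixes b k n p q :: nat
  assumes bk: "3 \<le> k" "b+k+2 \<le> n" and pq: "p < n" "q < n"
    and A: "\<And>c d. A c d = ((c<k \<and> d<k \<and> (d=c+1 \<or> c=d+1 \<or> (c=k-1 \<and> d=0) \<or> (c=0 \<and> d=k-1))) \<or> (k\<le>c \<and> k\<le>d \<and> c<n \<and> d<n \<and> (d=c+1 \<or> c=d+1)))"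
    and r: "\<And>q. r q = (if q \<le> b then k+q else if q \<le> b+k then q-(b+1) else q)"
    and ne: "A (r p) (r q) \<noteq> (q = p+1 \<or> p = q+1)"
  shows "(p,q) \<in> {(b,b+1),(b+1,b),(b+k,b+k+1),(b+k+1,b+k),(b+1,b+k),(b+k,b+1),(b,b+k+1),(b+k+1,b)}"
proof -
  have ne': "(A (r p) (r q)) = (\<not> (q = p+1 \<or> p = q+1))" using ne by blast
  consider (L) "p \<le> b" | (M) "b+1 \<le> p \<and> p \<le> b+k" | (R) "b+k < p" by linarith
  note pc = this
  consider (L) "q \<le> b" | (M) "b+1 \<le> q \<and> q \<le> b+k" | (R) "b+k < q" by linarith
  note qc = this
  show ?thesis
  proof (cases rule: pc)
    case pL: L
    hence rp: "r p = k+p" using r by simp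
    show ?thesis 
    proof (cases rule: qc)
      case L hence rq: "r q = k+q" using r by simp
      have "A (k+p) (k+q) = (q = p+1 \<or> p = q+1)" unfolding A using pL L bk by auto
      hence False using ne' unfolding rp rq by blast
      thus ?thesis ..
    next
      case M hence rq: "r q = q-(b+1)" using r by simp
      have "\<not> A (k+p) (q-(b+1))" unfolding A using pL M bk by auto
      hence "q = p+1" using ne' pL M unfolding rp rq by auto
      hence "p = b \<and> q = b+1" using pL M by auto
      thus ?thesis by simp
    next
      case R hence rq: "r q = q" using r by simp
      have "\<not> (q = p+1 \<or> p = q+1)" using pL R bk by auto
      hence "A (k+p) q" using ne' unfolding rp rq by simp
      hence "q = k+p+1" unfolding A using pL R bk by auto
      hence "p = b \<and> q = b+k+1" using pL R by auto
      thus ?thesis by simp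
    qed
  next
    case pM: M
    hence rp: "r p = p-(b+1)" using r by simp
    show ?thesis 
    proof (cases rule: qc)
      case L hence rq: "r q = k+q" using r by simp
      have "\<not> A (p-(b+1)) (k+q)" unfolding A using pM L bk by auto
      hence "p = q+1" using ne' pM L unfolding rp rq by auto
      hence "p = b+1 \<and> q = b" using pM L by auto
      thus ?thesis by simp
    next
      case M hence rq: "r q = q-(b+1)" using r by simp
      have e: "(p-(b+1) = q-(b+1)+1 \<or> q-(b+1) = p-(b+1)+1) = (q = p+1 \<or> p = q+1)" using pM M by auto
      have "A (p-(b+1)) (q-(b+1)) = ((q = p+1 \<or> p = q+1) \<or> (p-(b+1) = k-1 \<and> q-(b+1) = 0) \<or> (p-(b+1) = 0 \<and> q-(b+1) = k-1))"
        unfolding A using pM M bk e by auto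
      hence "(p-(b+1) = k-1 \<and> q-(b+1) = 0) \<or> (p-(b+1) = 0 \<and> q-(b+1) = k-1)" using ne' unfolding rp rq by auto
      hence "(p = b+k \<and> q = b+1) \<or> (p = b+1 \<and> q = b+k)" using pM M bk by auto
      thus ?thesis by auto
    next
      case R hence rq: "r q = q" using r by simp
      have "\<not> A (p-(b+1)) q" unfolding A using pM R bk by auto
      hence "q = p+1" using ne' pM R unfolding rp rq by auto
      hence "p = b+k \<and> q = b+k+1" using pM R by auto
      thus ?thesis by simp
    qed
  next
    case pR: R
    hence rp: "r p = p" using r by simp
    show ?thesis 
    proof (cases rule: qc)
      case L hence rq: "r q = k+q" using r by simp
      have "\<not> (q = p+1 \<or> p = q+1)" using pR L bk by auto
      hence "A p (k+q)" using ne' unfolding rp rq by simp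
      hence "p = k+q+1" unfolding A using pR L bk by auto
      hence "p = b+k+1 \<and> q = b" using pR L by auto
      thus ?thesis by simp
    next
      case M hence rq: "r q = q-(b+1)" using r by simp
      have "\<not> A p (q-(b+1))" unfolding A using pR M bk by auto
      hence "p = q+1" using ne' pR M unfolding rp rq by auto
      hence "p = b+k+1 \<and> q = b+k" using pR M by auto
      thus ?thesis by simp
    next
      case R hence rq: "r q = q" using r by simp
      have "A p q = (q = p+1 \<or> p = q+1)" unfolding A using pR R bk pq by auto
      hence False using ne' unfolding rp rq by blast
      thus ?thesis ..
    qed
  qed
qed

lemma sum8b:
  fixes b k :: nat and h :: "nat \<Rightarrow> nat \<Rightarrow> real"
  assumes "3 \<le> k" 
  shows "(\<Sum>(p,q)\<in>{(b,b+1),(b+1,b),(b+k,b+k+1),(b+k+1,b+k),(b+1,b+k),(b+k,b+1),(b,b+k+1),(b+k+1,b)}. h p q)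
    = h b (b+1) + h (b+1) b + h (b+k) (b+k+1) + h (b+k+1) (b+k) + h (b+1) (b+k) + h (b+k) (b+1) + h b (b+k+1) + h (b+k+1) b"
  using assms by (simp add: add.assoc)

lemma Mmult_join:
  assumes Hn: "verts H = n" and z: "z \<in> carrier_vec (m+n)" and p: "p < n"
  shows "(A_alpha \<alpha> (join (complete_graph m) H) *\<^sub>v z)$(m+p) = \<alpha> * (real m + (\<Sum>q<n. if adj H p q then 1 else 0)) * z$(m+p)
     + (1-\<alpha>) * ((\<Sum>u<m. z$u) + (\<Sum>q<n. if adj H p q then z$(m+q) else 0))"
proof -
  let ?J = "join (complete_graph m) H"
  have vJ: "verts ?J = m+n" using Hn by (simp add: join_verts)
  have z': "z \<in> carrier_vec (verts ?J)" using z vJ by simp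
  have mp: "m+p < verts ?J" using p vJ by simp
  have d: "real (degree ?J (m+p)) = real m + (\<Sum>q<n. if adj H p q then 1 else 0)"
    unfolding deg_sum vJ using nb_join[OF Hn p, of m "\<lambda>_. 1::real"] by simp
  have nb: "(\<Sum>j<verts ?J. if adj ?J (m+p) j then z $ j else 0) =
    (\<Sum>u<m. z$u) + (\<Sum>q<n. if adj H p q then z$(m+q) else 0)"
    unfolding vJ using nb_join[OF Hn p, of m "\<lambda>j. z$j"] by simp
  show ?thesis using A_mult[OF z' mp, of \<alpha>] d nb by simp
qed

lemma nb_H1_0:
  assumes k: "3 \<le> k" "k \<le> n"
  shows "(\<Sum>q<n. if adj (H1 k n) 0 q then F q else 0) = F 1 + F (k-1)"
proof -
  have "(\<Sum>q<n. if adj (H1 k n) 0 q then F q else 0) = (\<Sum>q<n. (if q = 1 then F q else 0) + (if q = k-1 then F q else 0))"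
    using k by (intro sum.cong refl) (auto simp: H1_adj'[OF k])
  also have "\<dots> = F 1 + F (k-1)" using k by (simp add: sum.distrib, auto)
  finally show ?thesis .
qed

lemma nb_H1_last:
  assumes n: "4 \<le> n"
  shows "(\<Sum>q<n. if adj (H1 (n-1) n) (n-1) q then F q else 0) = 0"
proof -
  have k: "3 \<le> n-1" "n-1 \<le> n" using n by auto
  have na: "\<not> adj (H1 (n-1) n) (n-1) q" for q using H1_adj'[OF k, of "n-1" q] n by auto
  show ?thesis by (intro sum.neutral ballI) (simp only: na if_False)
qed

locale PV =
  fixes \<alpha> :: real and m n :: nat and x :: "real vec" and \<rho> :: real
  assumes al: "1/2 < \<alpha>" "\<alpha> < 1" and m1: "1 \<le> m" and n3: "3 \<le> n"
    and xc: "x \<in> carrier_vec (m+n)" and pos: "\<And>i. i < m+n \<Longrightarrow> x$i > 0"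
    and eig: "A_alpha \<alpha> (join (complete_graph m) (path_graph n)) *\<^sub>v x = \<rho> \<cdot>\<^sub>v x"
    and xsym: "\<And>q. q < n \<Longrightarrow> x$(m+q) = x$(m+(n-1-q))"
    and maxi: "\<And>z. z \<in> carrier_vec (m+n) \<Longrightarrow> qf (A_alpha \<alpha> (join (complete_graph m) (path_graph n))) z \<ge> \<rho>*(z\<bullet>z)
       \<Longrightarrow> A_alpha \<alpha> (join (complete_graph m) (path_graph n)) *\<^sub>v z = \<rho> \<cdot>\<^sub>v z"
begin

abbreviation "J \<equiv> join (complete_graph m) (path_graph n)"
abbreviation "A2 \<equiv> A_alpha \<alpha> J"
definition "g q = x$(m+q)"
definition "S = (\<Sum>u<m. x$u)"

lemma vJ: "verts J = m+n" by (simp add: join_verts path_verts)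

lemma Mmult_H:
  assumes z: "z \<in> carrier_vec (m+n)" and p: "p < n"
  shows "(A2 *\<^sub>v z)$(m+p) = \<alpha> * (real m + (if 0<p then 1 else 0) + (if p+1<n then 1 else 0)) * z$(m+p)
     + (1-\<alpha>) * ((\<Sum>u<m. z$u) + (if 0<p then z$(m+(p-1)) else 0) + (if p+1<n then z$(m+(p+1)) else 0))"
proof -
  have z': "z \<in> carrier_vec (verts J)" using z vJ by simp
  have mp: "m+p < verts J" using p vJ by simp
  have d: "real (degree J (m+p)) = real m + (if 0<p then 1 else 0) + (if p+1<n then 1 else 0)"
    unfolding deg_sum vJ using nb_join[OF path_verts p, of m "\<lambda>_. 1::real"] nb_path[OF p, of "\<lambda>_. 1::real"]
    by simp
  have nb: "(\<Sum>j<verts J. if adj J (m+p) j then z $ j else 0) =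
    (\<Sum>u<m. z$u) + (if 0<p then z$(m+(p-1)) else 0) + (if p+1<n then z$(m+(p+1)) else 0)"
    unfolding vJ using nb_join[OF path_verts p, of m "\<lambda>j. z$j"] nb_path[OF p, of "\<lambda>q. z$(m+q)"]
    by simp
  show ?thesis using A_mult[OF z' mp, of \<alpha>] d nb by simp
qed

lemma gS_pos: "q < n \<Longrightarrow> g q > 0" unfolding g_def using pos by simp
lemma S_pos: "S > 0" unfolding S_def using pos m1 
  by (intro sum_pos) (auto simp: lessThan_empty_iff)

lemma path_eq:
  assumes p: "p < n"
  shows "\<rho> * g p = \<alpha> * (real m + (if 0<p then 1 else 0) + (if p+1<n then 1 else 0)) * g p
     + (1-\<alpha>) * (S + (if 0<p then g (p-1) else 0) + (if p+1<n then g (p+1) else 0))"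
proof -
  have "(A2 *\<^sub>v x)$(m+p) = \<rho> * x$(m+p)" using eig xc p by simp
  thus ?thesis using Mmult_H[OF xc p] unfolding g_def S_def by simp
qed

lemma g_sym: "q < n \<Longrightarrow> g q = g (n-1-q)" unfolding g_def using xsym by simp

lemma qfx: "qf A2 x = \<rho> * (x \<bullet> x)" unfolding qf_def eig using xc by simp

lemma test:
  assumes P: "perm_on \<tau> \<tau> n" and ge: "EF \<alpha> (\<lambda>p q. adj (path_graph n) (\<tau> p) (\<tau> q)) n g \<ge> EF \<alpha> (adj (path_graph n)) n g"
  shows "A2 *\<^sub>v lift m n \<tau> x = \<rho> \<cdot>\<^sub>v lift m n \<tau> x"
proof (rule maxi[OF lift_carrier])
  have "qf A2 (lift m n \<tau> x) - qf A2 x = (EF \<alpha> (adj (path_graph n)) n (\<lambda>q. x$(m+\<tau> q)) - EF \<alpha> (adj (path_graph n)) n (\<lambda>q. x$(m+q))) / 2"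
    by (rule lift_qf[OF P xc path_verts path_verts path_sym path_sym])
  also have "EF \<alpha> (adj (path_graph n)) n (\<lambda>q. x$(m+\<tau> q)) = EF \<alpha> (\<lambda>p q. adj (path_graph n) (\<tau> p) (\<tau> q)) n g"
    using EF_perm[OF P, of \<alpha> "adj (path_graph n)" g] unfolding g_def by simp
  finally have "qf A2 (lift m n \<tau> x) \<ge> qf A2 x" using ge unfolding g_def by simp
  thus "\<rho> * (lift m n \<tau> x \<bullet> lift m n \<tau> x) \<le> qf A2 (lift m n \<tau> x)"
    unfolding lift_sq[OF P xc] qfx by simp
qed


definition "sw q = (if q = 0 then 1 else if q = 1 then 0 else (q::nat))"

lemma mono0: "g 0 < g 1"
proof (rule ccontr)
  assume "\<not> g 0 < g 1"
  hence le: "g 1 \<le> g 0" by simp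
  have P: "perm_on sw sw n" unfolding perm_on_def sw_def using n3 by auto
  let ?D = "{(1,2),(2,1),(0,2),(2,0)} :: (nat \<times> nat) set"
  have d: "EF \<alpha> (\<lambda>p q. adj (path_graph n) (sw p) (sw q)) n g - EF \<alpha> (adj (path_graph n)) n g
     = 2 * (ee \<alpha> (g 0) (g 2) - ee \<alpha> (g 1) (g 2))"
  proof -
    have "EF \<alpha> (\<lambda>p q. adj (path_graph n) (sw p) (sw q)) n g - EF \<alpha> (adj (path_graph n)) n g
      = (\<Sum>(p,q)\<in>?D. (if adj (path_graph n) (sw p) (sw q) then ee \<alpha> (g p) (g q) else 0) - (if adj (path_graph n) p q then ee \<alpha> (g p) (g q) else 0))"
      by (rule EF_diff, insert n3, auto simp: path_adj sw_def)
    also have "\<dots> = 2 * (ee \<alpha> (g 0) (g 2) - ee \<alpha> (g 1) (g 2))"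
      using n3 by (simp add: path_adj sw_def ee_sym)
    finally show ?thesis .
  qed
  have "ee \<alpha> (g 0) (g 2) - ee \<alpha> (g 1) (g 2) = (g 0 - g 1) * (\<alpha> * (g 0 + g 1) + 2*(1-\<alpha>)*g 2)"
    unfolding ee_def by (simp add: algebra_simps power2_eq_square)
  also have "\<dots> \<ge> 0" using le al gS_pos[of 0] gS_pos[of 1] gS_pos[of 2] n3
    by (intro mult_nonneg_nonneg add_nonneg_nonneg) auto
  finally have "EF \<alpha> (\<lambda>p q. adj (path_graph n) (sw p) (sw q)) n g \<ge> EF \<alpha> (adj (path_graph n)) n g"
    using d by simp
  from test[OF P this] have e: "A2 *\<^sub>v lift m n sw x = \<rho> \<cdot>\<^sub>v lift m n sw x" .
  have "(A2 *\<^sub>v lift m n sw x) $ (m+0) = \<rho> * lift m n sw x $ (m+0)"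
    using e n3 by (simp add: lift_carrier)
  also have "lift m n sw x $ (m+0) = g 1" using n3 by (simp add: lift_idx g_def sw_def)
  finally have "\<rho> * g 1 = (A2 *\<^sub>v lift m n sw x) $ (m+0)" by simp
  also have "\<dots> = \<alpha> * (real m + 1) * g 1 + (1-\<alpha>) * (S + g 0)"
    using Mmult_H[OF lift_carrier, of 0 sw] n3
    by (simp add: lift_idx g_def sw_def S_def)
  finally have e1: "\<rho> * g 1 = \<alpha> * (real m + 1) * g 1 + (1-\<alpha>) * (S + g 0)" .
  have e2: "\<rho> * g 1 = \<alpha> * (real m + 2) * g 1 + (1-\<alpha>) * (S + g 0 + g 2)"
    using path_eq[of 1] n3 by (simp add: eval_nat_numeral add.commute)
  from e1 e2 have "\<alpha> * g 1 + (1-\<alpha>) * g 2 = 0" by (simp add: algebra_simps)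
  moreover have "\<alpha> * g 1 + (1-\<alpha>) * g 2 > 0" using al gS_pos[of 1] gS_pos[of 2] n3
    by (intro add_pos_pos mult_pos_pos) auto
  ultimately show False by simp
qed


lemma mono_step:
  assumes ni: "2*(a+1)+3 \<le> n" and prev: "g a < g (a+1)"
  shows "g (a+1) < g (a+2)"
proof (rule ccontr)
  assume "\<not> g (a+1) < g (a+2)"
  hence le: "g (a+2) \<le> g (a+1)" by simp
  define j where "j = n-3-a"
  have j: "a+2 \<le> j" "j+1 < n" "n-1-j = a+2" "n-1-(j+1) = a+1" using ni unfolding j_def by auto
  define rv where "rv q = (if a+1 \<le> q \<and> q \<le> j then a+1+j-q else q)" for q
  have P: "perm_on rv rv n" unfolding perm_on_def rv_def using j by auto
  let ?D = "{(a,a+1),(a+1,a),(j,j+1),(j+1,j),(a,j),(j,a),(a+1,j+1),(j+1,a+1)}"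
  let ?h = "\<lambda>p q. (if adj (path_graph n) (rv p) (rv q) then ee \<alpha> (g p) (g q) else 0) - (if adj (path_graph n) p q then ee \<alpha> (g p) (g q) else 0)"
  have d: "EF \<alpha> (\<lambda>p q. adj (path_graph n) (rv p) (rv q)) n g - EF \<alpha> (adj (path_graph n)) n g
     = 2 * (ee \<alpha> (g a) (g j) + ee \<alpha> (g (a+1)) (g (j+1)) - ee \<alpha> (g a) (g (a+1)) - ee \<alpha> (g j) (g (j+1)))"
  proof -
    have "EF \<alpha> (\<lambda>p q. adj (path_graph n) (rv p) (rv q)) n g - EF \<alpha> (adj (path_graph n)) n g
      = (\<Sum>(p,q)\<in>?D. ?h p q)"
    proof (rule EF_diff')
      show "?D \<subseteq> {..<n} \<times> {..<n}" using j by auto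
    next
      fix p q assume "p < n" "q < n" "adj (path_graph n) (rv p) (rv q) \<noteq> adj (path_graph n) p q"
      thus "(p,q) \<in> ?D" by (rule rev_adj[OF j(1,2) _ _ rv_def])
    qed
    also have "\<dots> = ?h a (a+1) + ?h (a+1) a + ?h j (j+1) + ?h (j+1) j + ?h a j + ?h j a + ?h (a+1) (j+1) + ?h (j+1) (a+1)"
      by (rule sum8a[OF j(1)])
    also have "\<dots> = 2 * (ee \<alpha> (g a) (g j) + ee \<alpha> (g (a+1)) (g (j+1)) - ee \<alpha> (g a) (g (a+1)) - ee \<alpha> (g j) (g (j+1)))"
    proof -
      have r: "rv a = a" "rv (a+1) = j" "rv j = a+1" "rv (j+1) = j+1" using j unfolding rv_def by auto
      have h1: "?h a (a+1) = - ee \<alpha> (g a) (g (a+1))" "?h (a+1) a = - ee \<alpha> (g a) (g (a+1))"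
        using j unfolding r by (auto simp: path_adj ee_sym)
      have h2: "?h j (j+1) = - ee \<alpha> (g j) (g (j+1))" "?h (j+1) j = - ee \<alpha> (g j) (g (j+1))"
        using j unfolding r by (auto simp: path_adj ee_sym)
      have h3: "?h a j = ee \<alpha> (g a) (g j)" "?h j a = ee \<alpha> (g a) (g j)"
        using j unfolding r by (auto simp: path_adj ee_sym)
      have h4: "?h (a+1) (j+1) = ee \<alpha> (g (a+1)) (g (j+1))" "?h (j+1) (a+1) = ee \<alpha> (g (a+1)) (g (j+1))"
        using j unfolding r by (auto simp: path_adj ee_sym)
      show ?thesis unfolding h1 h2 h3 h4 by simp
    qed
    finally show ?thesis .
  qed
  have gj: "g j = g (a+2)" "g (j+1) = g (a+1)" using g_sym[of j] g_sym[of "j+1"] j by auto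
  have "ee \<alpha> (g a) (g j) + ee \<alpha> (g (a+1)) (g (j+1)) - ee \<alpha> (g a) (g (a+1)) - ee \<alpha> (g j) (g (j+1))
      = 2 * (1-\<alpha>) * ((g (a+1) - g a) * (g (a+1) - g (a+2)))"
    unfolding gj ee_def by (simp add: algebra_simps power2_eq_square)
  also have "\<dots> \<ge> 0" using le prev al by (intro mult_nonneg_nonneg) auto
  finally have "EF \<alpha> (\<lambda>p q. adj (path_graph n) (rv p) (rv q)) n g \<ge> EF \<alpha> (adj (path_graph n)) n g"
    using d by simp
  from test[OF P this] have e: "A2 *\<^sub>v lift m n rv x = \<rho> \<cdot>\<^sub>v lift m n rv x" .
  have iin: "a+1 < n" using j by simp
  have "(A2 *\<^sub>v lift m n rv x) $ (m+(a+1)) = \<rho> * lift m n rv x $ (m+(a+1))"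
    using e iin by simp
  also have "lift m n rv x $ (m+(a+1)) = g j" using iin j by (simp add: lift_idx g_def rv_def)
  finally have "\<rho> * g j = (A2 *\<^sub>v lift m n rv x) $ (m+(a+1))" by simp
  also have "\<dots> = \<alpha> * (real m + 2) * g j + (1-\<alpha>) * (S + g a + g (j-1))"
    using Mmult_H[OF lift_carrier iin, of rv] iin j
    by (simp add: lift_idx g_def rv_def S_def)
  finally have e1: "\<rho> * g j = \<alpha> * (real m + 2) * g j + (1-\<alpha>) * (S + g a + g (j-1))" .
  have e2: "\<rho> * g j = \<alpha> * (real m + 2) * g j + (1-\<alpha>) * (S + g (j-1) + g (j+1))"
    using path_eq[of j] j by simp
  from e1 e2 al have "g a = g (j+1)" by simp
  thus False using prev gj by simp
qed

lemma mono: "2*i+3 \<le> n \<Longrightarrow> g i < g (i+1)"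
proof (induction i)
  case 0 thus ?case using mono0 by simp
next
  case (Suc i)
  thus ?case using mono_step[of i] by simp
qed

end


lemma nb_H1_last':
  assumes k: "3 \<le> k"
  shows "(\<Sum>q<k+1. if adj (H1 k (k+1)) k q then F q else 0) = 0"
proof -
  have k': "3 \<le> k" "k \<le> k+1" using k by auto
  have na: "\<not> adj (H1 k (k+1)) k q" for q using H1_adj'[OF k', of k q] by auto
  show ?thesis by (intro sum.neutral ballI) (simp only: na if_False)
qed

context PV begin

abbreviation "A1 k \<equiv> A_alpha \<alpha> (join (complete_graph m) (H1 k n))"

lemma final_last:
  assumes k3: "3 \<le> k" and kn: "n = k+1"
  shows "\<exists>y \<in> carrier_vec (m+n). qf (A1 k) y \<ge> \<rho>*(y\<bullet>y) \<and> A1 k *\<^sub>v y \<noteq> \<rho> \<cdot>\<^sub>v y"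
proof -
  have kk: "3 \<le> k" "k \<le> n" using k3 kn by auto
  define idf where "idf = (\<lambda>q::nat. q)"
  have P: "perm_on idf idf n" unfolding perm_on_def idf_def by auto
  define y where "y = lift m n idf x"
  have y: "y \<in> carrier_vec (m+n)" unfolding y_def by (rule lift_carrier)
  have q: "qf (A1 k) y - qf A2 x = (EF \<alpha> (adj (H1 k n)) n (\<lambda>q. x$(m+idf q)) - EF \<alpha> (adj (path_graph n)) n (\<lambda>q. x$(m+q))) / 2"
    unfolding y_def by (rule lift_qf[OF P xc path_verts H1_verts[OF kk(2)] path_sym H1_sym[OF kk(2)]])
  let ?D = "{(k-1,0),(0,k-1),(k-1,k),(k,k-1)} :: (nat \<times> nat) set"
  let ?h = "\<lambda>p q. (if adj (H1 k n) p q then ee \<alpha> (g p) (g q) else 0) - (if adj (path_graph n) p q then ee \<alpha> (g p) (g q) else 0)"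
  have "EF \<alpha> (adj (H1 k n)) n g - EF \<alpha> (adj (path_graph n)) n g = (\<Sum>(p,q)\<in>?D. ?h p q)"
  proof (rule EF_diff')
    show "?D \<subseteq> {..<n} \<times> {..<n}" using kn k3 by auto
  next
    fix p q assume pq: "p < n" "q < n" "adj (H1 k n) p q \<noteq> adj (path_graph n) p q"
    thus "(p,q) \<in> ?D" using H1_adj'[OF kk, of p q] path_adj[of n p q] kn by auto
  qed
  also have "\<dots> = ?h (k-1) 0 + ?h 0 (k-1) + ?h (k-1) k + ?h k (k-1)" using k3 by (simp add: add.assoc)
  also have "\<dots> = 0"
  proof -
    have "g 0 = g k" using g_sym[of 0] kn by simp
    moreover have "?h (k-1) 0 = ee \<alpha> (g (k-1)) (g 0)" "?h 0 (k-1) = ee \<alpha> (g (k-1)) (g 0)"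
      "?h (k-1) k = - ee \<alpha> (g (k-1)) (g k)" "?h k (k-1) = - ee \<alpha> (g (k-1)) (g k)"
      using k3 kn H1_adj'[OF kk, of "k-1" 0] H1_adj'[OF kk, of 0 "k-1"] H1_adj'[OF kk, of "k-1" k] H1_adj'[OF kk, of k "k-1"]
        path_adj[of n "k-1" 0] path_adj[of n 0 "k-1"] path_adj[of n "k-1" k] path_adj[of n k "k-1"] by (auto simp: ee_sym)
    ultimately show ?thesis by simp
  qed
  finally have "qf (A1 k) y = qf A2 x" using q unfolding idf_def g_def by simp
  hence ge: "qf (A1 k) y \<ge> \<rho>*(y\<bullet>y)" unfolding qfx y_def lift_sq[OF P xc] by simp
  have ne: "A1 k *\<^sub>v y \<noteq> \<rho> \<cdot>\<^sub>v y"
  proof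
    assume e: "A1 k *\<^sub>v y = \<rho> \<cdot>\<^sub>v y"
    have kn': "k < n" using kn by simp
    have "(A1 k *\<^sub>v y) $ (m+k) = \<rho> * y $ (m+k)" using e kn' y by simp
    also have "y $ (m+k) = g k" unfolding y_def g_def idf_def using kn' by (simp add: lift_idx)
    finally have "\<rho> * g k = (A1 k *\<^sub>v y) $ (m+k)" by simp
    also have "\<dots> = \<alpha> * real m * g k + (1-\<alpha>) * S"
    proof -
      have z1: "(\<Sum>q<n. if adj (H1 k n) k q then (1::real) else 0) = 0" unfolding kn by (rule nb_H1_last'[OF k3])
      have z2: "(\<Sum>q<n. if adj (H1 k n) k q then y$(m+q) else 0) = 0" unfolding kn by (rule nb_H1_last'[OF k3])
      have sK: "(\<Sum>u<m. y$u) = S" unfolding S_def y_def by (intro sum.cong refl) (simp add: lift_idx)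
      have yk: "y $ (m+k) = g k" unfolding y_def g_def idf_def using kn' by (simp add: lift_idx)
      show ?thesis using Mmult_join[OF H1_verts[OF kk(2)] y kn', of \<alpha>] unfolding z1 z2 sK yk by simp
    qed
    finally have e1: "\<rho> * g k = \<alpha> * real m * g k + (1-\<alpha>) * S" .
    have e2: "\<rho> * g k = \<alpha> * (real m + 1) * g k + (1-\<alpha>) * (S + g (k-1))"
      using path_eq[of k] kn k3 by simp
    from e1 e2 have "\<alpha> * g k + (1-\<alpha>) * g (k-1) = 0" by (simp add: algebra_simps)
    moreover have "\<alpha> * g k + (1-\<alpha>) * g (k-1) > 0" using al gS_pos[of k] gS_pos[of "k-1"] kn
      by (intro add_pos_pos mult_pos_pos) auto
    ultimately show False by simp
  qed
  show ?thesis using y ge ne by blast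
qed


lemma final_mid:
  assumes k3: "3 \<le> k" and kn2: "k+2 \<le> n"
  shows "\<exists>y \<in> carrier_vec (m+n). qf (A1 k) y \<ge> \<rho>*(y\<bullet>y) \<and> A1 k *\<^sub>v y \<noteq> \<rho> \<cdot>\<^sub>v y"
proof -
  have kk: "3 \<le> k" "k \<le> n" using k3 kn2 by auto
  define b where "b = (n-k) div 2 - 1"
  have bk: "b+k+2 \<le> n" and par: "n = 2*b+2+k \<or> n = 2*b+3+k" using kn2 unfolding b_def by presburger+
  define \<psi> where "\<psi> q = (if q \<le> b then k+q else if q \<le> b+k then q-(b+1) else q)" for q
  define \<pi> where "\<pi> c = (if c < k then c+b+1 else if c < k+b+1 then c-k else c)" for c
  have P: "perm_on \<pi> \<psi> n" unfolding perm_on_def \<pi>_def \<psi>_def using bk by auto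
  define y where "y = lift m n \<pi> x"
  have y: "y \<in> carrier_vec (m+n)" unfolding y_def by (rule lift_carrier)
  have q: "qf (A1 k) y - qf A2 x = (EF \<alpha> (adj (H1 k n)) n (\<lambda>q. x$(m+\<pi> q)) - EF \<alpha> (adj (path_graph n)) n (\<lambda>q. x$(m+q))) / 2"
    unfolding y_def by (rule lift_qf[OF P xc path_verts H1_verts[OF kk(2)] path_sym H1_sym[OF kk(2)]])
  have ep: "EF \<alpha> (adj (H1 k n)) n (\<lambda>q. x$(m+\<pi> q)) = EF \<alpha> (\<lambda>p q. adj (H1 k n) (\<psi> p) (\<psi> q)) n g"
    using EF_perm[OF P, of \<alpha> "adj (H1 k n)" g] unfolding g_def by simp
  let ?D = "{(b,b+1),(b+1,b),(b+k,b+k+1),(b+k+1,b+k),(b+1,b+k),(b+k,b+1),(b,b+k+1),(b+k+1,b)}"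
  let ?h = "\<lambda>p q. (if adj (H1 k n) (\<psi> p) (\<psi> q) then ee \<alpha> (g p) (g q) else 0) - (if adj (path_graph n) p q then ee \<alpha> (g p) (g q) else 0)"
  have "EF \<alpha> (\<lambda>p q. adj (H1 k n) (\<psi> p) (\<psi> q)) n g - EF \<alpha> (adj (path_graph n)) n g = (\<Sum>(p,q)\<in>?D. ?h p q)"
  proof (rule EF_diff')
    show "?D \<subseteq> {..<n} \<times> {..<n}" using bk by auto
  next
    fix p q assume pq: "p < n" "q < n" and ne: "adj (H1 k n) (\<psi> p) (\<psi> q) \<noteq> adj (path_graph n) p q"
    have ne': "adj (H1 k n) (\<psi> p) (\<psi> q) \<noteq> (q = p+1 \<or> p = q+1)" using ne pq by (simp add: path_adj)
    show "(p,q) \<in> ?D" by (rule sig_adj0[OF k3 bk pq, where A="adj (H1 k n)" and r=\<psi>, OF H1_adj'[OF kk] \<psi>_def ne'])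
  qed
  also have "\<dots> = ?h b (b+1) + ?h (b+1) b + ?h (b+k) (b+k+1) + ?h (b+k+1) (b+k) + ?h (b+1) (b+k) + ?h (b+k) (b+1) + ?h b (b+k+1) + ?h (b+k+1) b"
    by (rule sum8b[OF k3])
  also have "\<dots> = 2 * (ee \<alpha> (g (b+1)) (g (b+k)) + ee \<alpha> (g b) (g (b+k+1)) - ee \<alpha> (g b) (g (b+1)) - ee \<alpha> (g (b+k)) (g (b+k+1)))"
  proof -
    have r: "\<psi> b = k+b" "\<psi> (b+1) = 0" "\<psi> (b+k) = k-1" "\<psi> (b+k+1) = b+k+1" unfolding \<psi>_def using k3 by auto
    have h1: "?h b (b+1) = - ee \<alpha> (g b) (g (b+1))" "?h (b+1) b = - ee \<alpha> (g b) (g (b+1))"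
      unfolding r using k3 bk by (auto simp: H1_adj'[OF kk] path_adj ee_sym)
    have h2: "?h (b+k) (b+k+1) = - ee \<alpha> (g (b+k)) (g (b+k+1))" "?h (b+k+1) (b+k) = - ee \<alpha> (g (b+k)) (g (b+k+1))"
      unfolding r using k3 bk by (auto simp: H1_adj'[OF kk] path_adj ee_sym)
    have h3: "?h (b+1) (b+k) = ee \<alpha> (g (b+1)) (g (b+k))" "?h (b+k) (b+1) = ee \<alpha> (g (b+1)) (g (b+k))"
      unfolding r using k3 bk by (auto simp: H1_adj'[OF kk] path_adj ee_sym)
    have h4: "?h b (b+k+1) = ee \<alpha> (g b) (g (b+k+1))" "?h (b+k+1) b = ee \<alpha> (g b) (g (b+k+1))"
      unfolding r using k3 bk by (auto simp: H1_adj'[OF kk] path_adj ee_sym)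
    show ?thesis unfolding h1 h2 h3 h4 by simp
  qed
  finally have d: "EF \<alpha> (\<lambda>p q. adj (H1 k n) (\<psi> p) (\<psi> q)) n g - EF \<alpha> (adj (path_graph n)) n g = 
    2 * (ee \<alpha> (g (b+1)) (g (b+k)) + ee \<alpha> (g b) (g (b+k+1)) - ee \<alpha> (g b) (g (b+1)) - ee \<alpha> (g (b+k)) (g (b+k+1)))" .
  have alg: "ee \<alpha> (g (b+1)) (g (b+k)) + ee \<alpha> (g b) (g (b+k+1)) - ee \<alpha> (g b) (g (b+1)) - ee \<alpha> (g (b+k)) (g (b+k+1))
     = 2 * (1-\<alpha>) * ((g (b+1) - g (b+k+1)) * (g (b+k) - g b))"
    unfolding ee_def by (simp add: algebra_simps power2_eq_square)
  have m0: "g b < g (b+1)" using mono[of b] bk par k3 by auto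
  have keyfacts: "(g (b+1) - g (b+k+1)) * (g (b+k) - g b) \<ge> 0 \<and> g (b+k) > g b"
  proof (cases "n = 2*b+2+k")
    case True
    have "g (b+k+1) = g b" "g (b+k) = g (b+1)" using g_sym[of "b+k+1"] g_sym[of "b+k"] True by auto
    thus ?thesis using m0 k3 by auto
  next
    case False
    hence o: "n = 2*b+3+k" using par by simp
    have "g (b+k+1) = g (b+1)" "g (b+k) = g (b+2)" using g_sym[of "b+k+1"] g_sym[of "b+k"] o by auto
    moreover have "g (b+1) < g (b+2)" using mono[of "b+1"] o k3 by auto
    ultimately show ?thesis using m0 k3 by auto
  qed
  have gg: "(\<lambda>q. x$(m+q)) = g" by (simp add: g_def fun_eq_iff)
  have pos: "ee \<alpha> (g (b+1)) (g (b+k)) + ee \<alpha> (g b) (g (b+k+1)) - ee \<alpha> (g b) (g (b+1)) - ee \<alpha> (g (b+k)) (g (b+k+1)) \<ge> 0"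
  proof -
    have c0: "2*(1-\<alpha>) \<ge> 0" using al by simp
    show ?thesis unfolding alg by (rule mult_nonneg_nonneg[OF c0 conjunct1[OF keyfacts]])
  qed
  have "qf (A1 k) y - qf A2 x \<ge> 0"
    unfolding q ep gg using d pos by simp
  hence ge: "qf (A1 k) y \<ge> \<rho>*(y\<bullet>y)" unfolding qfx y_def lift_sq[OF P xc] by simp
  have ne: "A1 k *\<^sub>v y \<noteq> \<rho> \<cdot>\<^sub>v y"
  proof
    assume e: "A1 k *\<^sub>v y = \<rho> \<cdot>\<^sub>v y"
    have n0: "0 < n" using kn2 by simp
    have "(A1 k *\<^sub>v y) $ (m+0) = \<rho> * y $ (m+0)" using e n0 y by simp
    also have y0: "y $ (m+0) = g (b+1)" unfolding y_def g_def using n0 k3 by (simp add: lift_idx \<pi>_def)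
    finally have "\<rho> * g (b+1) = (A1 k *\<^sub>v y) $ (m+0)" by simp
    also have "\<dots> = \<alpha> * (real m + 2) * g (b+1) + (1-\<alpha>) * (S + g (b+2) + g (b+k))"
    proof -
      have z1: "(\<Sum>q<n. if adj (H1 k n) 0 q then (1::real) else 0) = 2" using nb_H1_0[OF kk, of "\<lambda>_. 1::real"] by simp
      have z2: "(\<Sum>q<n. if adj (H1 k n) 0 q then y$(m+q) else 0) = g (b+2) + g (b+k)"
      proof -
        have a1: "y$(m+1) = g (b+2)" unfolding y_def g_def using k3 kn2 
          by (subst lift_idx_H) (auto simp: \<pi>_def)
        have a2: "y$(m+(k-1)) = g (b+k)" unfolding y_def g_def using k3 kn2 
          by (subst lift_idx_H) (auto simp: \<pi>_def add.commute)
        show ?thesis using nb_H1_0[OF kk, of "\<lambda>q. y$(m+q)"] unfolding a1 a2 .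
      qed
      have sK: "(\<Sum>u<m. y$u) = S" unfolding S_def y_def by (intro sum.cong refl) (simp add: lift_idx)
      show ?thesis using Mmult_join[OF H1_verts[OF kk(2)] y n0, of \<alpha>] unfolding z1 z2 sK y0 by (simp add: algebra_simps)
    qed
    finally have e1: "\<rho> * g (b+1) = \<alpha> * (real m + 2) * g (b+1) + (1-\<alpha>) * (S + g (b+2) + g (b+k))" .
    have e2: "\<rho> * g (b+1) = \<alpha> * (real m + 2) * g (b+1) + (1-\<alpha>) * (S + g b + g (b+2))"
    proof -
      have "b+1+1 < n" using bk k3 by simp
      thus ?thesis using path_eq[of "b+1"] bk by (simp add: algebra_simps eval_nat_numeral)
    qed
    from e1 e2 al have "g (b+k) = g b" by simp
    thus False using keyfacts by simp
  qed
  show ?thesis using y ge ne by blast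
qed

end


theorem mainTheorem18:
  fixes \<alpha> :: real and m n k :: nat
  assumes "1/2 < \<alpha>" and "\<alpha> < 1" and "1 \<le> m"
    and "3 \<le> k" and "k \<le> n - 1"
  shows "lambda1 (A_alpha \<alpha> (join (complete_graph m) (disj_union (cycle_graph k) (path_graph (n - k)))))
       > lambda1 (A_alpha \<alpha> (join (complete_graph m) (path_graph n)))"
proof -
  have al: "1/2 < \<alpha>" "\<alpha> < 1" and m1: "1 \<le> m" and k3: "3 \<le> k" using assms by auto
  have n4: "4 \<le> n" and kn: "k \<le> n" "k+1 \<le> n" using assms by auto
  define J2 where "J2 = join (complete_graph m) (path_graph n)"
  define J1 where "J1 = join (complete_graph m) (H1 k n)"
  define A2 where "A2 = A_alpha \<alpha> J2"
  define A1 where "A1 = A_alpha \<alpha> J1"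
  define N where "N = m+n"
  have vJ2: "verts J2 = N" unfolding J2_def N_def by (simp add: join_verts path_verts)
  have vJ1: "verts J1 = N" unfolding J1_def N_def by (simp add: join_verts H1_verts[OF kn(1)])
  have sy2: "\<And>i j. adj J2 i j = adj J2 j i" unfolding J2_def by (rule join_sym[OF path_sym])
  have sy1: "\<And>i j. adj J1 i j = adj J1 j i" unfolding J1_def by (rule join_sym[OF H1_sym[OF kn(1)]])
  have S2: "symm A2 N" unfolding A2_def using A_symm[of J2 \<alpha>] sy2 vJ2 by simp
  have S1: "symm A1 N" unfolding A1_def using A_symm[of J1 \<alpha>] sy1 vJ1 by simp
  have P2: "psd A2 N" unfolding A2_def using A_psd[of J2 \<alpha>] sy2 vJ2 al by simp
  have P1: "psd A1 N" unfolding A1_def using A_psd[of J1 \<alpha>] sy1 vJ1 al by simp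
  have N0: "N > 0" unfolding N_def using m1 by simp
  have A2c: "A2 \<in> carrier_mat N N" using symm_carrier[OF S2] .
  define \<rho> where "\<rho> = lambda1 A2"
  obtain v where v: "v \<in> carrier_vec N" "v \<noteq> 0\<^sub>v N" "A2 *\<^sub>v v = \<rho> \<cdot>\<^sub>v v"
    using lambda1_props(1)[OF S2 N0] A2c unfolding \<rho>_def eigenvalue_def eigenvector_def by auto
  define w where "w = vec N (\<lambda>i. \<bar>v$i\<bar>)"
  have w: "w \<in> carrier_vec N" unfolding w_def by simp
  have ww: "w \<bullet> w = v \<bullet> v" using sprod_sum[OF w w] sprod_sum[OF v(1) v(1)] unfolding w_def
    by (simp add: abs_mult_self)
  have qfv: "qf A2 v = \<rho> * (v \<bullet> v)" unfolding qf_def v(3) using v(1) by simp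
  have qfw: "qf A2 w \<ge> qf A2 v"
  proof -
    have "EF \<alpha> (adj J2) N (\<lambda>i. v$i) \<le> EF \<alpha> (adj J2) N (\<lambda>i. w$i)" unfolding EF_def
    proof (intro sum_mono)
      fix i j assume "i \<in> {..<N}" "j \<in> {..<N}"
      hence wi: "w$i = \<bar>v$i\<bar>" "w$j = \<bar>v$j\<bar>" unfolding w_def by auto
      have "ee \<alpha> (v$i) (v$j) \<le> ee \<alpha> (w$i) (w$j)"
      proof -
        have "v$i * v$j \<le> \<bar>v$i\<bar> * \<bar>v$j\<bar>" by (metis abs_ge_self abs_mult)
        hence "2*(1-\<alpha>)*(v$i * v$j) \<le> 2*(1-\<alpha>)*(\<bar>v$i\<bar> * \<bar>v$j\<bar>)" using al by (intro mult_left_mono) auto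
        thus ?thesis unfolding ee_def wi by (simp add: mult.assoc)
      qed
      thus "(if adj J2 i j then ee \<alpha> (v$i) (v$j) else 0) \<le> (if adj J2 i j then ee \<alpha> (w$i) (w$j) else 0)" by simp
    qed
    thus ?thesis unfolding A2_def using A_qf[of J2 v \<alpha>] A_qf[of J2 w \<alpha>] sy2 v(1) w vJ2 by simp
  qed
  have Aw: "A2 *\<^sub>v w = \<rho> \<cdot>\<^sub>v w"
    unfolding \<rho>_def by (rule maximizer_ev[OF S2 N0 P2 w], insert qfw qfv ww, simp add: \<rho>_def)
  define rv where "rv q = n-1-q" for q
  have Prv: "perm_on rv rv n" unfolding perm_on_def rv_def by auto
  define wr where "wr = lift m n rv w"
  have wN: "w \<in> carrier_vec (m+n)" using w N_def by simp
  have wr: "wr \<in> carrier_vec N" unfolding wr_def N_def by (rule lift_carrier)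
  have qfwr: "qf A2 wr = qf A2 w"
  proof -
    have "qf A2 wr - qf A2 w = (EF \<alpha> (adj (path_graph n)) n (\<lambda>q. w$(m+rv q)) - EF \<alpha> (adj (path_graph n)) n (\<lambda>q. w$(m+q))) / 2"
      unfolding wr_def A2_def J2_def by (rule lift_qf[OF Prv wN path_verts path_verts path_sym path_sym])
    also have "EF \<alpha> (adj (path_graph n)) n (\<lambda>q. w$(m+rv q)) = EF \<alpha> (\<lambda>p q. adj (path_graph n) (rv p) (rv q)) n (\<lambda>q. w$(m+q))"
      by (rule EF_perm[OF Prv])
    also have "\<dots> = EF \<alpha> (adj (path_graph n)) n (\<lambda>q. w$(m+q))" 
    proof -
      have pw: "adj (path_graph n) (rv p) (rv q) = adj (path_graph n) p q" if "p < n" "q < n" for p q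
        using that unfolding path_adj rv_def by arith
      show ?thesis unfolding EF_def by (rule sum.cong[OF refl], rule sum.cong[OF refl], simp add: pw)
    qed
    finally show ?thesis by simp
  qed
  have Awr: "A2 *\<^sub>v wr = \<rho> \<cdot>\<^sub>v wr"
    unfolding \<rho>_def by (rule maximizer_ev[OF S2 N0 P2 wr], insert qfwr qfw qfv ww lift_sq[OF Prv wN],
      simp add: \<rho>_def wr_def)
  define x where "x = w + wr"
  have xc: "x \<in> carrier_vec N" unfolding x_def using w wr by simp
  have Ax: "A2 *\<^sub>v x = \<rho> \<cdot>\<^sub>v x"
    unfolding x_def using mult_add_distrib_mat_vec[OF A2c w wr] Aw Awr smult_add_distrib_vec[of w N wr \<rho>] w wr
    by simp
  have wnn: "i < N \<Longrightarrow> w$i \<ge> 0" for i unfolding w_def by simp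
  have wrnn: "i < N \<Longrightarrow> wr$i \<ge> 0" for i unfolding wr_def using wnn N_def by (auto simp: lift_idx rv_def)
  have xnn: "i < N \<Longrightarrow> x$i \<ge> 0" for i unfolding x_def using w wr wnn wrnn by simp
  obtain i0 where i0: "i0 < N" "x$i0 > 0"
  proof -
    obtain i where i: "i < N" "v$i \<noteq> 0" using v(1,2) by (metis eq_vecI carrier_vecD index_zero_vec)
    have "x$i > 0" unfolding x_def using i w wr wrnn[of i] unfolding w_def by simp
    thus ?thesis using i that by blast
  qed
  have eqx: "\<alpha> * real (degree J2 i) * x$i + (1-\<alpha>) * (\<Sum>j<N. if adj J2 i j then x$j else 0) = \<rho> * x$i" if "i < N" for i
  proof -
    have "(A2 *\<^sub>v x)$i = \<rho> * x$i" using Ax xc that by simp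
    thus ?thesis using A_mult[of x J2 i \<alpha>] xc vJ2 that unfolding A2_def by simp
  qed
  have znb: "\<And>j. j < N \<Longrightarrow> adj J2 i j \<Longrightarrow> x$j = 0" if "i < N" "x$i = 0" for i
  proof -
    have "(1-\<alpha>) * (\<Sum>j<N. if adj J2 i j then x$j else 0) = 0" using eqx[OF that(1)] that(2) by simp
    hence s0: "(\<Sum>j<N. if adj J2 i j then x$j else 0) = 0" using al by simp
    have "\<forall>j\<in>{..<N}. (if adj J2 i j then x$j else 0) = 0"
      using s0 by (subst sum_nonneg_eq_0_iff[symmetric]) (auto intro: xnn)
    thus "\<And>j. j < N \<Longrightarrow> adj J2 i j \<Longrightarrow> x$j = 0" by force
  qed
  have Kpos: "x$u > 0" if "u < m" for u
  proof (rule ccontr)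
    assume "\<not> x$u > 0"
    hence x0: "x$u = 0" using xnn[of u] that N_def by simp
    have "x$j = 0" if "j < N" for j
    proof (cases "j = u")
      case True thus ?thesis using x0 by simp
    next
      case False
      have "adj J2 u j" unfolding J2_def join_adj path_verts using False \<open>u<m\<close> \<open>j<N\<close> N_def by auto
      thus ?thesis using znb[of u j] that \<open>u<m\<close> x0 N_def by simp
    qed
    thus False using i0 by simp
  qed
  have pos: "x$i > 0" if "i < m+n" for i
  proof (cases "i < m")
    case True thus ?thesis using Kpos by simp
  next
    case False
    show ?thesis
    proof (rule ccontr)
      assume "\<not> x$i > 0"
      hence x0: "x$i = 0" using xnn[of i] that N_def by simp
      have "adj J2 i 0" unfolding J2_def join_adj path_verts using False that m1 by auto
      hence "x$0 = 0" using znb[of i 0] that x0 N_def m1 by simp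
      thus False using Kpos[of 0] m1 by simp
    qed
  qed
  have xsym: "x$(m+q) = x$(m+(n-1-q))" if "q < n" for q
  proof -
    have "x$(m+q) = w$(m+q) + w$(m+(n-1-q))" unfolding x_def wr_def using that w N_def
      by (auto simp: lift_idx rv_def Suc_diff_Suc)
    moreover have "x$(m+(n-1-q)) = w$(m+(n-1-q)) + w$(m+q)" unfolding x_def wr_def using that w N_def
      by (auto simp: lift_idx rv_def Suc_diff_Suc)
    ultimately show ?thesis by simp
  qed
  have maxi: "A2 *\<^sub>v z = \<rho> \<cdot>\<^sub>v z" if "z \<in> carrier_vec (m+n)" "qf A2 z \<ge> \<rho>*(z\<bullet>z)" for z
    unfolding \<rho>_def by (rule maximizer_ev[OF S2 N0 P2], insert that, auto simp: N_def \<rho>_def)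
  interpret PV \<alpha> m n x \<rho>
    by (unfold_locales, insert al m1 n4 xc pos Ax xsym maxi, auto simp: N_def A2_def J2_def)
  obtain y where y: "y \<in> carrier_vec (m+n)" "qf A1 y \<ge> \<rho>*(y\<bullet>y)" "A1 *\<^sub>v y \<noteq> \<rho> \<cdot>\<^sub>v y"
  proof (cases "n = k+1")
    case True thus ?thesis using final_last[OF k3 True] that unfolding A1_def J1_def by blast
  next
    case False hence "k+2 \<le> n" using kn by simp
    thus ?thesis using final_mid[OF k3] that unfolding A1_def J1_def by blast
  qed
  have "lambda1 A1 > \<rho>" by (rule lambda1_gt2[OF S1 N0 P1 _ y(2) y(3)], insert y(1), simp add: N_def)
  thus ?thesis unfolding A1_def J1_def \<rho>_def A2_def J2_def H1_def .
qed

end
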